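(* There is an absolute constant $C>0$ and an algorithm with the following property. Let $S$ be a set of arms with reward distributions supported on $[0,1]$ and means $\theta_1\ge\dots\ge\theta_{|S|}$ (indexing unknown to the algorithm), let $K\ge1$ and $\tau\in(0,1/2]$ be such that $\tau K$ is an integer, $(1-\tau)K\ge1$ and $(1+\tau)K+1\le|S|$, and let $\phi\in(0,1]$, $\delta\in(0,1/2]$. If $\theta_{(1-\tau)K}-\theta_{(1+\tau)K+1}\ge\phi$, then the algorithm, given $S,K,\tau,\phi,\delta$, makes at most $C\frac{|S|}{\phi^2}(\log\frac1\tau+\log\frac1\delta)$ pulls and with probability at least $1-\delta$ outputs a $(2\tau)$-top-$K$ set of arms of $S$.
   Context: Stochastic bandit model: each pull yields an independent sample from the pulled arm's unknown distribution. For $T\subseteq S$ with $|T|=K$, the aggregate regret is $\frac1K(\sum_{i=1}^K\theta_i-\sum_{i\in T}\theta_i)$; $T$ is a $\gamma$-top-$K$ set if $|T|=K$ and its aggregate regret is at most $\gamma$. *)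

theory Defs
  imports "HOL-Probability.Probability"
begin

datatype bandit_action = Pull nat | Output "nat set"

type_synonym history = "(nat \<times> real) list"

text \<open>Reward-table model of the stochastic bandit: r (i, j) is the reward obtained at the
j-th pull (counting from 0) of arm i.  exec P r n h = Some T means that, starting from
history h, the (deterministic, given its random seed) policy P stops with output T after
at most n further pulls.\<close>

fun exec :: "(history \<Rightarrow> bandit_action) \<Rightarrow> (nat \<times> nat \<Rightarrow> real) \<Rightarrow> nat \<Rightarrow> history
    \<Rightarrow> nat set option" where
  "exec P r 0 h = (case P h of Output T \<Rightarrow> Some T | Pull i \<Rightarrow> None)"
| "exec P r (Suc n) h = (case P h of Output T \<Rightarrow> Some T
     | Pull i \<Rightarrow> exec P r n (h @ [(i, r (i, length (filter (\<lambda>p. fst p = i) h)))]))"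

text \<open>Joint law of the reward table (independent samples; samples of arm i have law D i)
and of the algorithm's internal randomness (an i.i.d. sequence of uniform [0,1] seeds).\<close>

definition bandit_space :: "nat set \<Rightarrow> (nat \<Rightarrow> real measure)
    \<Rightarrow> ((nat \<times> nat \<Rightarrow> real) \<times> (nat \<Rightarrow> real)) measure" where
  "bandit_space S D =
     (\<Pi>\<^sub>M p\<in>S \<times> UNIV. D (fst p)) \<Otimes>\<^sub>M (\<Pi>\<^sub>M k\<in>(UNIV::nat set). uniform_measure lborel {0..1::real})"

definition mean :: "real measure \<Rightarrow> real" where
  "mean M = (\<integral>x. x \<partial>M)"

text \<open>theta_(k): the k-th largest mean (1-indexed) among the arms of S.\<close>

definition kth_mean :: "(nat \<Rightarrow> real) \<Rightarrow> nat set \<Rightarrow> nat \<Rightarrow> real" where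
  "kth_mean \<theta> S k = rev (sort (map \<theta> (sorted_list_of_set S))) ! (k - 1)"

definition aggregate_regret :: "(nat \<Rightarrow> real) \<Rightarrow> nat set \<Rightarrow> nat \<Rightarrow> nat set \<Rightarrow> real" where
  "aggregate_regret \<theta> S K T =
     (1 / real K) * ((\<Sum>k = 1..K. kth_mean \<theta> S k) - (\<Sum>i\<in>T. \<theta> i))"

definition top_K_set :: "(nat \<Rightarrow> real) \<Rightarrow> nat set \<Rightarrow> nat \<Rightarrow> real \<Rightarrow> nat set \<Rightarrow> bool" where
  "top_K_set \<theta> S K \<gamma> T \<longleftrightarrow> T \<subseteq> S \<and> card T = K \<and> aggregate_regret \<theta> S K T \<le> \<gamma>"

end

theory Submission
  imports Defs "HOL-Combinatorics.Permutations"
begin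


definition bef :: "(nat \<Rightarrow> real) \<Rightarrow> nat \<Rightarrow> nat \<Rightarrow> bool" where
  "bef v j i \<longleftrightarrow> v i < v j \<or> (v j = v i \<and> j < i)"

definition rank :: "nat set \<Rightarrow> (nat \<Rightarrow> real) \<Rightarrow> nat \<Rightarrow> nat" where
  "rank Z v i = card {j\<in>Z. bef v j i}"

definition sel :: "nat set \<Rightarrow> (nat \<Rightarrow> real) \<Rightarrow> nat \<Rightarrow> nat set" where
  "sel Z v k = {i\<in>Z. rank Z v i < k}"

lemma sel_subset: "sel Z v k \<subseteq> Z"
  by (auto simp: sel_def)

lemma sel_cong: "(\<And>i. i\<in>Z \<Longrightarrow> v i = w i) \<Longrightarrow> sel Z v k = sel Z w k"
proof -
  assume a: "\<And>i. i\<in>Z \<Longrightarrow> v i = w i"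
  have "rank Z v i = rank Z w i" if "i \<in> Z" for i
  proof -
    have "{j\<in>Z. bef v j i} = {j\<in>Z. bef w j i}"
      using a that unfolding bef_def by auto
    then show ?thesis unfolding rank_def by simp
  qed
  then show ?thesis unfolding sel_def by auto
qed

lemma bef_trans: "bef v x j \<Longrightarrow> bef v j i \<Longrightarrow> bef v x i"
  unfolding bef_def by auto

lemma bef_irrefl: "\<not> bef v i i"
  unfolding bef_def by auto

lemma rank_less:
  assumes "finite Z" "bef v j i" "j \<in> Z"
  shows "rank Z v j < rank Z v i"
proof -
  have "{x\<in>Z. bef v x j} \<subset> {x\<in>Z. bef v x i}"
  proof
    show "{x\<in>Z. bef v x j} \<subseteq> {x\<in>Z. bef v x i}" using bef_trans[OF _ assms(2)] by auto
    show "{x\<in>Z. bef v x j} \<noteq> {x\<in>Z. bef v x i}" using assms(2,3) bef_irrefl by auto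
  qed
  then show ?thesis unfolding rank_def using assms(1) by (simp add: psubset_card_mono)
qed

lemma rank_inj:
  assumes "finite Z" shows "inj_on (rank Z v) Z"
proof (rule inj_onI)
  fix i j assume ij: "i \<in> Z" "j \<in> Z" "rank Z v i = rank Z v j"
  show "i = j"
  proof (rule ccontr)
    assume "i \<noteq> j"
    then have "bef v j i \<or> bef v i j" unfolding bef_def by auto
    then show False using rank_less[OF assms] ij by fastforce
  qed
qed

lemma rank_lt_card:
  assumes "finite Z" "i \<in> Z" shows "rank Z v i < card Z"
proof -
  have "{j\<in>Z. bef v j i} \<subset> Z" using assms bef_irrefl by auto
  then show ?thesis unfolding rank_def using assms by (simp add: psubset_card_mono)
qed

lemma rank_image:
  assumes "finite Z" shows "rank Z v ` Z = {..<card Z}"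
proof -
  have "rank Z v ` Z \<subseteq> {..<card Z}" using rank_lt_card[OF assms] by auto
  moreover have "card (rank Z v ` Z) = card {..<card Z}"
    using card_image[OF rank_inj[OF assms]] by simp
  ultimately show ?thesis by (simp add: card_subset_eq)
qed

lemma sel_card:
  assumes "finite Z" "k \<le> card Z" shows "card (sel Z v k) = k"
proof -
  have "rank Z v ` sel Z v k = {..<card Z} \<inter> {..<k}"
    using rank_image[OF assms(1), of v] unfolding sel_def by auto
  also have "\<dots> = {..<k}" using assms(2) by auto
  finally have "card (rank Z v ` sel Z v k) = k" by simp
  moreover have "inj_on (rank Z v) (sel Z v k)"
    by (rule inj_on_subset[OF rank_inj[OF assms(1)] sel_subset])
  ultimately show ?thesis using card_image by metis
qed

lemma sel_ge:
  assumes "finite Z" "i \<in> Z" "i \<notin> sel Z v k" "j \<in> sel Z v k"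
  shows "v i \<le> v j"
proof (rule ccontr)
  assume "\<not> v i \<le> v j"
  then have "bef v i j" unfolding bef_def by auto
  then have "rank Z v i < rank Z v j" using rank_less[OF assms(1) _ assms(2)] by blast
  then show False using assms unfolding sel_def by auto
qed



lemma kth_perm:
  assumes "finite S"
  obtains \<sigma> where "bij_betw \<sigma> {..<card S} S"
    "\<And>p. p < card S \<Longrightarrow> \<theta> (\<sigma> p) = kth_mean \<theta> S (Suc p)"
    "\<And>p q. p \<le> q \<Longrightarrow> q < card S \<Longrightarrow> kth_mean \<theta> S (Suc q) \<le> kth_mean \<theta> S (Suc p)"
proof -
  define xs where "xs = sorted_list_of_set S"
  define ys where "ys = rev (sort (map \<theta> xs))"
  have lxs: "length xs = card S" unfolding xs_def by simp
  have lys: "length ys = card S" unfolding ys_def using lxs by simp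
  have k: "kth_mean \<theta> S (Suc p) = ys ! p" for p unfolding kth_mean_def ys_def xs_def by simp
  have "mset (map \<theta> xs) = mset ys" unfolding ys_def by simp
  from mset_eq_permutation[OF this] obtain p where
    p: "p permutes {..<length ys}" "permute_list p ys = map \<theta> xs" by blast
  have yq: "ys ! q = \<theta> (xs ! (inv p q))" if "q < card S" for q
  proof -
    have pi: "inv p permutes {..<length ys}" using p(1) by (simp add: permutes_inv)
    have "inv p q < card S" using permutes_in_image[OF pi] that lys by auto
    then have "map \<theta> xs ! (inv p q) = \<theta> (xs ! (inv p q))" using lxs by simp
    also have "map \<theta> xs ! (inv p q) = permute_list p ys ! (inv p q)" using p(2) by simp
    also have "\<dots> = ys ! (p (inv p q))"
      using permute_list_nth[OF p(1)] \<open>inv p q < card S\<close> lys by simp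
    also have "p (inv p q) = q" using permutes_inverses(1)[OF p(1)] by simp
    finally show ?thesis by simp
  qed
  show ?thesis
  proof
    have b1: "bij_betw (inv p) {..<card S} {..<card S}"
      using permutes_imp_bij[OF permutes_inv[OF p(1)]] lys by simp
    have b2: "bij_betw ((!) xs) {..<card S} S"
      using bij_betw_nth[of xs "{..<card S}" S] lxs assms unfolding xs_def by simp
    show "bij_betw (\<lambda>q. xs ! (inv p q)) {..<card S} S"
      using bij_betw_trans[OF b1 b2] by (simp add: comp_def)
    show "\<theta> (xs ! (inv p q)) = kth_mean \<theta> S (Suc q)" if "q < card S" for q
      using yq[OF that] k by simp
    show "kth_mean \<theta> S (Suc q) \<le> kth_mean \<theta> S (Suc p')" if "p' \<le> q" "q < card S" for p' q
    proof -
      have s: "sorted (sort (map \<theta> xs))" by simp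
      have ls: "length (sort (map \<theta> xs)) = card S" using lxs by simp
      have "ys ! q = sort (map \<theta> xs) ! (card S - Suc q)"
        unfolding ys_def using that ls by (simp add: rev_nth)
      moreover have "ys ! p' = sort (map \<theta> xs) ! (card S - Suc p')"
        unfolding ys_def using that ls by (simp add: rev_nth)
      ultimately show ?thesis using sorted_nth_mono[OF s, of "card S - Suc q" "card S - Suc p'"] that ls k
        by simp
    qed
  qed
qed

lemma kth_ge_card:
  assumes "finite S" "1 \<le> k" "k \<le> card S"
  shows "k \<le> card {i\<in>S. kth_mean \<theta> S k \<le> \<theta> i}"
proof -
  obtain \<sigma> where s: "bij_betw \<sigma> {..<card S} S"
    "\<And>p. p < card S \<Longrightarrow> \<theta> (\<sigma> p) = kth_mean \<theta> S (Suc p)"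
    "\<And>p q. p \<le> q \<Longrightarrow> q < card S \<Longrightarrow> kth_mean \<theta> S (Suc q) \<le> kth_mean \<theta> S (Suc p)"
    using kth_perm[OF assms(1)] by blast
  have sub: "\<sigma> ` {..<k} \<subseteq> {i\<in>S. kth_mean \<theta> S k \<le> \<theta> i}"
  proof
    fix x assume "x \<in> \<sigma> ` {..<k}"
    then obtain p where p: "p < k" "x = \<sigma> p" by auto
    have "x \<in> S" using s(1) p assms(3) by (auto simp: bij_betw_def)
    moreover have "kth_mean \<theta> S k \<le> \<theta> x"
      using s(2)[of p] s(3)[of p "k - 1"] p assms by simp
    ultimately show "x \<in> {i\<in>S. kth_mean \<theta> S k \<le> \<theta> i}" by simp
  qed
  have "inj_on \<sigma> {..<k}" using s(1) assms(3) unfolding bij_betw_def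
    by (meson inj_on_subset lessThan_subset_iff)
  then have "card (\<sigma> ` {..<k}) = k" by (simp add: card_image)
  then show ?thesis using card_mono[OF _ sub] assms(1) by simp
qed

lemma kth_gt_card:
  assumes "finite S" "1 \<le> k" "k \<le> card S"
  shows "card {i\<in>S. kth_mean \<theta> S k < \<theta> i} < k"
proof -
  obtain \<sigma> where s: "bij_betw \<sigma> {..<card S} S"
    "\<And>p. p < card S \<Longrightarrow> \<theta> (\<sigma> p) = kth_mean \<theta> S (Suc p)"
    "\<And>p q. p \<le> q \<Longrightarrow> q < card S \<Longrightarrow> kth_mean \<theta> S (Suc q) \<le> kth_mean \<theta> S (Suc p)"
    using kth_perm[OF assms(1)] by blast
  have sub: "{i\<in>S. kth_mean \<theta> S k < \<theta> i} \<subseteq> \<sigma> ` {..<k - 1}"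
  proof
    fix x assume x: "x \<in> {i\<in>S. kth_mean \<theta> S k < \<theta> i}"
    then obtain p where p: "p < card S" "x = \<sigma> p" using s(1)
      by (metis (no_types, lifting) bij_betw_iff_bijections lessThan_iff mem_Collect_eq)
    have "p < k - 1"
    proof (rule ccontr)
      assume "\<not> p < k - 1"
      then have "kth_mean \<theta> S (Suc p) \<le> kth_mean \<theta> S (Suc (k-1))" using s(3)[of "k-1" p] p by simp
      then show False using x p s(2)[of p] assms(2) by simp
    qed
    then show "x \<in> \<sigma> ` {..<k - 1}" using p by auto
  qed
  have "card (\<sigma> ` {..<k - 1}) \<le> k - 1" using card_image_le by (metis card_lessThan finite_lessThan)
  moreover have "card {i\<in>S. kth_mean \<theta> S k < \<theta> i} \<le> card (\<sigma> ` {..<k - 1})"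
    using card_mono[OF _ sub] by simp
  ultimately show ?thesis using assms(2) by linarith
qed

lemma topK_exists:
  assumes "finite S" "K \<le> card S"
  shows "\<exists>U\<subseteq>S. card U = K \<and> (\<Sum>k=1..K. kth_mean \<theta> S k) = (\<Sum>i\<in>U. \<theta> i) \<and>
           (\<forall>u\<in>U. \<forall>j\<in>S - U. \<theta> j \<le> \<theta> u)"
proof -
  obtain \<sigma> where s: "bij_betw \<sigma> {..<card S} S"
    "\<And>p. p < card S \<Longrightarrow> \<theta> (\<sigma> p) = kth_mean \<theta> S (Suc p)"
    "\<And>p q. p \<le> q \<Longrightarrow> q < card S \<Longrightarrow> kth_mean \<theta> S (Suc q) \<le> kth_mean \<theta> S (Suc p)"
    using kth_perm[OF assms(1)] by blast
  have inj: "inj_on \<sigma> {..<card S}" using s(1) by (auto simp: bij_betw_def)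
  have injK: "inj_on \<sigma> {..<K}" using inj assms(2) by (meson inj_on_subset lessThan_subset_iff)
  define U where "U = \<sigma> ` {..<K}"
  have US: "U \<subseteq> S" unfolding U_def using s(1) assms(2) by (auto simp: bij_betw_def)
  have cU: "card U = K" unfolding U_def using injK by (simp add: card_image)
  have "(\<Sum>k=1..K. kth_mean \<theta> S k) = (\<Sum>p<K. kth_mean \<theta> S (Suc p))"
    by (induction K) auto
  also have "\<dots> = (\<Sum>p<K. \<theta> (\<sigma> p))" using s(2) assms(2) by (intro sum.cong) auto
  also have "\<dots> = (\<Sum>i\<in>U. \<theta> i)" unfolding U_def using sum.reindex[OF injK, of \<theta>] by simp
  finally have sumU: "(\<Sum>k=1..K. kth_mean \<theta> S k) = (\<Sum>i\<in>U. \<theta> i)" .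
  have ord: "\<theta> j \<le> \<theta> u" if uj: "u \<in> U" "j \<in> S - U" for u j
  proof -
    obtain p where p: "p < K" "u = \<sigma> p" using uj(1) unfolding U_def by blast
    obtain q where q: "q < card S" "j = \<sigma> q" using uj(2) s(1)
      by (metis DiffD1 bij_betw_iff_bijections lessThan_iff)
    have "\<not> q < K" using uj(2) q unfolding U_def by auto
    then show ?thesis using s(2)[of p] s(2)[of q] s(3)[of p q] p q assms(2) by simp
  qed
  show ?thesis using US cU sumU ord by blast
qed

lemma regret_core:
  fixes \<theta> :: "nat \<Rightarrow> real"
  assumes fin: "finite S" and KS: "K \<le> card S" and th: "\<And>i. i \<in> S \<Longrightarrow> 0 \<le> \<theta> i \<and> \<theta> i \<le> 1"
    and T: "T \<subseteq> S" "card T = K"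
    and As: "As = {i\<in>S. hi \<le> \<theta> i}" "K \<le> card As + t"
    and Bs: "Bs = {i\<in>S. \<theta> i \<le> lo}" "card (S - Bs) \<le> K + t"
    and good: "card (As - T) \<le> t \<or> card (T \<inter> Bs) \<le> t"
  shows "(\<Sum>k=1..K. kth_mean \<theta> S k) - (\<Sum>i\<in>T. \<theta> i) \<le> 2 * real t"
proof -
  obtain U where U: "U \<subseteq> S" "card U = K" "(\<Sum>k=1..K. kth_mean \<theta> S k) = (\<Sum>i\<in>U. \<theta> i)"
    "\<forall>u\<in>U. \<forall>j\<in>S - U. \<theta> j \<le> \<theta> u"
    using topK_exists[OF fin KS] by blast
  have fU: "finite U" and fT: "finite T" using U(1) T(1) fin finite_subset by auto
  have "(\<Sum>i\<in>U. \<theta> i) = (\<Sum>i\<in>U \<inter> T. \<theta> i) + (\<Sum>i\<in>U - T. \<theta> i)"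
    using fU by (metis Diff_Diff_Int Diff_disjoint Int_Diff_Un Int_commute sum.union_disjoint finite_Diff finite_Int inf.commute)
  moreover have "(\<Sum>i\<in>T. \<theta> i) = (\<Sum>i\<in>U \<inter> T. \<theta> i) + (\<Sum>i\<in>T - U. \<theta> i)"
    using fT by (metis Int_commute sum.Int_Diff)
  moreover have "(\<Sum>i\<in>U - T. \<theta> i) \<le> real (card (U - T))"
    using sum_mono[of "U - T" \<theta> "\<lambda>_. 1"] th U(1) by auto
  moreover have "0 \<le> (\<Sum>i\<in>T - U. \<theta> i)" using th T(1) by (intro sum_nonneg) auto
  ultimately have D: "(\<Sum>i\<in>U. \<theta> i) - (\<Sum>i\<in>T. \<theta> i) \<le> real (card (U - T))" by linarith
  have cUT: "card (U - T) = card (T - U)"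
    using U(2) T(2) fU fT by (metis card_Diff_subset_Int Int_commute finite_Int)
  have fin2: "finite As" "finite Bs" using fin As(1) Bs(1) by auto
  have "card (U - T) \<le> 2 * t"
    using good
  proof
    assume g: "card (As - T) \<le> t"
    have "card (U - As) \<le> t"
    proof (cases "U - As = {}")
      case False
      then obtain u where u: "u \<in> U" "u \<notin> As" by auto
      have "As \<subseteq> U"
      proof
        fix a assume a: "a \<in> As"
        show "a \<in> U"
        proof (rule ccontr)
          assume "a \<notin> U"
          then have "\<theta> a \<le> \<theta> u" using U(4) u a As(1) by auto
          moreover have "\<not> hi \<le> \<theta> u" using u U(1) As(1) by auto
          ultimately show False using a As(1) by auto
        qed
      qed
      then have "card (U - As) = K - card As" using U(2) fin2 by (simp add: card_Diff_subset)
      then show ?thesis using As(2) by simp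
    next
      case True
      have "card (U - As) = 0" by (simp only: True card.empty)
      then show ?thesis by simp
    qed
    moreover have "U - T \<subseteq> (As - T) \<union> (U - As)" by auto
    then have "card (U - T) \<le> card (As - T) + card (U - As)"
      using fU fin2 by (meson card_Un_le card_mono finite_Diff finite_UnI le_trans)
    ultimately show ?thesis using g by simp
  next
    assume g: "card (T \<inter> Bs) \<le> t"
    have "card ((S - Bs) - U) \<le> t"
    proof (cases "U \<inter> Bs = {}")
      case True
      then have "U \<subseteq> S - Bs" using U(1) by auto
      then have "card ((S - Bs) - U) = card (S - Bs) - K" using U(2) fU by (simp add: card_Diff_subset)
      then show ?thesis using Bs(2) by simp
    next
      case False
      then obtain u where u: "u \<in> U" "u \<in> Bs" by auto
      have "(S - Bs) - U = {}"
      proof (rule ccontr)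
        assume "(S - Bs) - U \<noteq> {}"
        then obtain j where j: "j \<in> S" "j \<notin> Bs" "j \<notin> U" by auto
        then have "\<theta> j \<le> \<theta> u" using U(4) u by auto
        then show False using u j Bs(1) by auto
      qed
      then have "card ((S - Bs) - U) = 0" by (simp only: card.empty)
      then show ?thesis by simp
    qed
    moreover have "T - U \<subseteq> (T \<inter> Bs) \<union> ((S - Bs) - U)" using T(1) by auto
    then have "card (T - U) \<le> card (T \<inter> Bs) + card ((S - Bs) - U)"
      using fT fin by (meson card_Un_le card_mono finite_Diff finite_UnI finite_Int le_trans)
    ultimately show ?thesis using g cUT by simp
  qed
  then show ?thesis using D U(3) by simp
qed



locale alg =
  fixes S :: "nat set" and K :: nat and \<tau> \<phi> \<delta> :: real
begin

definition m :: "nat \<Rightarrow> nat" where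
  "m w = nat \<lceil>2 / \<phi>\<^sup>2 * (ln (1/\<tau>) + ln (1/\<delta>) + real (2*w+8) * ln 2)\<rceil>"
definition Mc :: "nat \<Rightarrow> nat" where "Mc w = (\<Sum>l<w. m l)"
definition L :: nat where "L = (LEAST w. card S div 2^(Suc w) < 4*K)"
definition sz :: "nat \<Rightarrow> nat" where "sz w = card S div 2^w"
definition X :: "(nat \<times> nat \<Rightarrow> real) \<Rightarrow> nat \<Rightarrow> nat \<Rightarrow> real" where
  "X r i w = (\<Sum>t<m w. r (i, Mc w + t)) / real (m w)"
primrec Sset :: "(nat \<times> nat \<Rightarrow> real) \<Rightarrow> nat \<Rightarrow> nat set" where
  "Sset r 0 = S"
| "Sset r (Suc w) = sel (Sset r w) (\<lambda>i. X r i w) (sz (Suc w))"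
definition out :: "(nat \<times> nat \<Rightarrow> real) \<Rightarrow> nat set" where
  "out r = sel (Sset r L) (\<lambda>i. X r i L) K"
definition cnt :: "history \<Rightarrow> nat \<Rightarrow> nat" where
  "cnt h i = length (filter (\<lambda>p. fst p = i) h)"
definition tab :: "history \<Rightarrow> nat \<times> nat \<Rightarrow> real" where
  "tab h = (\<lambda>(i,j). snd (filter (\<lambda>p. fst p = i) h ! j))"
definition unmet :: "history \<Rightarrow> nat \<Rightarrow> nat set" where
  "unmet h w = {i \<in> Sset (tab h) w. cnt h i < Mc (Suc w)}"
definition policy :: "history \<Rightarrow> bandit_action" where
  "policy h = (if \<exists>w\<le>L. unmet h w \<noteq> {}
      then Pull (Min (unmet h (LEAST w. unmet h w \<noteq> {}))) else Output (out (tab h)))"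
definition need :: "(nat \<times> nat \<Rightarrow> real) \<Rightarrow> nat \<Rightarrow> nat" where
  "need r i = (\<Sum>w\<le>L. if i \<in> Sset r w then m w else 0)"
definition consistent :: "(nat \<times> nat \<Rightarrow> real) \<Rightarrow> history \<Rightarrow> bool" where
  "consistent r h \<longleftrightarrow> (\<forall>i j. j < cnt h i \<longrightarrow> tab h (i,j) = r (i,j))"

lemma Sset_sub: "Sset r w \<subseteq> S"
proof (induction w)
  case (Suc w) then show ?case using sel_subset[of "Sset r w"] by auto
qed simp

lemma Sset_Suc_sub: "Sset r (Suc w) \<subseteq> Sset r w"
  by (simp add: sel_subset)

lemma Sset_anti: "w \<le> w' \<Longrightarrow> Sset r w' \<subseteq> Sset r w"
proof (induction w' rule: dec_induct)
  case (step k) then show ?case using Sset_Suc_sub by blast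
qed simp

lemma Mc_Suc: "Mc (Suc w) = Mc w + m w"
  by (simp add: Mc_def)

lemma X_agree:
  assumes "\<And>j. j < Mc (Suc w) \<Longrightarrow> r' (i,j) = r (i,j)"
  shows "X r' i w = X r i w"
proof -
  have "(\<Sum>t<m w. r' (i, Mc w + t)) = (\<Sum>t<m w. r (i, Mc w + t))"
    by (rule sum.cong) (auto simp: assms Mc_Suc)
  then show ?thesis by (simp add: X_def)
qed

lemma Sset_agree:
  assumes "\<forall>w'<w. \<forall>i\<in>Sset r w'. \<forall>j<Mc (Suc w'). r' (i,j) = r (i,j)"
  shows "Sset r' w = Sset r w"
  using assms
proof (induction w)
  case (Suc w)
  have p: "\<forall>w'<w. \<forall>i\<in>Sset r w'. \<forall>j<Mc (Suc w'). r' (i,j) = r (i,j)"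
    using Suc.prems less_SucI by blast
  have IH: "Sset r' w = Sset r w" by (rule Suc.IH[OF p])
  have "X r' i w = X r i w" if "i \<in> Sset r w" for i
    using Suc.prems that by (intro X_agree) auto
  then have "sel (Sset r w) (\<lambda>i. X r' i w) (sz (Suc w)) = sel (Sset r w) (\<lambda>i. X r i w) (sz (Suc w))"
    by (rule sel_cong)
  then show ?case using IH by simp
qed simp

lemma met_agree:
  assumes c: "consistent r h" and met: "\<forall>w'<w. unmet h w' = {}"
  shows "\<forall>w'<w. \<forall>i\<in>Sset r w'. \<forall>j<Mc (Suc w'). tab h (i,j) = r (i,j)"
  using met
proof (induction w)
  case (Suc w)
  have p: "\<forall>w'<w. unmet h w' = {}" using Suc.prems by simp
  have IH: "\<forall>w'<w. \<forall>i\<in>Sset r w'. \<forall>j<Mc (Suc w'). tab h (i,j) = r (i,j)" by (rule Suc.IH[OF p])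
  have eq: "Sset (tab h) w = Sset r w" by (rule Sset_agree[OF IH])
  have "\<forall>i\<in>Sset r w. \<forall>j<Mc (Suc w). tab h (i,j) = r (i,j)"
  proof (intro ballI allI impI)
    fix i j assume i: "i \<in> Sset r w" and j: "j < Mc (Suc w)"
    have "unmet h w = {}" using Suc.prems by simp
    then have "\<not> cnt h i < Mc (Suc w)" using i eq unfolding unmet_def by blast
    then have "Mc (Suc w) \<le> cnt h i" by simp
    then show "tab h (i,j) = r (i,j)" using c j unfolding consistent_def by auto
  qed
  note new = this
  show ?case
  proof (intro allI impI)
    fix w' assume "w' < Suc w"
    then consider "w' < w" | "w' = w" by linarith
    then show "\<forall>i\<in>Sset r w'. \<forall>j<Mc (Suc w'). tab h (i,j) = r (i,j)"
    proof cases
      case 1 then show ?thesis using IH by blast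
    next
      case 2 then show ?thesis using new by blast
    qed
  qed
qed simp

lemma need_ge:
  assumes "i \<in> Sset r w" "w \<le> L"
  shows "Mc (Suc w) \<le> need r i"
proof -
  have "Mc (Suc w) = (\<Sum>l\<le>w. if i \<in> Sset r l then m l else 0)"
    unfolding Mc_def using Sset_anti assms(1) lessThan_Suc_atMost
    by (intro sum.cong) auto
  also have "\<dots> \<le> need r i" unfolding need_def
    using assms(2) by (intro sum_mono2) auto
  finally show ?thesis .
qed

lemma policy_cases:
  assumes fin: "finite S" and c: "consistent r h"
  shows "(\<exists>i\<in>S. cnt h i < need r i \<and> policy h = Pull i) \<or> policy h = Output (out r)"
proof (cases "\<exists>w\<le>L. unmet h w \<noteq> {}")
  case True
  define w0 where "w0 = (LEAST w. unmet h w \<noteq> {})"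
  obtain w1 where l1: "w1 \<le> L" "unmet h w1 \<noteq> {}" using True by blast
  have ne: "unmet h w0 \<noteq> {}" unfolding w0_def using l1(2) by (rule LeastI)
  have le: "w0 \<le> L" unfolding w0_def using l1 Least_le[of "\<lambda>w. unmet h w \<noteq> {}" w1] by simp
  have met: "\<forall>w'<w0. unmet h w' = {}"
  proof (intro allI impI)
    fix w' assume "w' < w0"
    then show "unmet h w' = {}" using not_less_Least[of w' "\<lambda>w. unmet h w \<noteq> {}"] unfolding w0_def by simp
  qed
  have eq: "Sset (tab h) w0 = Sset r w0" by (rule Sset_agree[OF met_agree[OF c met]])
  have "unmet h w0 \<subseteq> S" using Sset_sub[of "tab h" w0] unfolding unmet_def by blast
  then have fu: "finite (unmet h w0)" using fin finite_subset by blast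
  define i0 where "i0 = Min (unmet h w0)"
  have i0: "i0 \<in> unmet h w0" unfolding i0_def using fu ne by simp
  then have i0': "i0 \<in> Sset r w0" "cnt h i0 < Mc (Suc w0)" using eq unfolding unmet_def by auto
  have "cnt h i0 < need r i0" using need_ge[OF i0'(1) le] i0'(2) by simp
  moreover have "i0 \<in> S" using i0'(1) Sset_sub by auto
  moreover have "policy h = Pull i0" unfolding policy_def i0_def w0_def by (rule if_P[OF True])
  ultimately show ?thesis by blast
next
  case False
  then have met: "\<forall>w'<Suc L. unmet h w' = {}" by auto
  note ag = met_agree[OF c met]
  have ag': "\<forall>w'<L. \<forall>i\<in>Sset r w'. \<forall>j<Mc (Suc w'). tab h (i,j) = r (i,j)"
  proof (intro allI impI ballI)
    fix w' i j assume a: "w'<L" "i\<in>Sset r w'" "j < Mc (Suc w')"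
    have "w' < Suc L" using a(1) by simp
    then show "tab h (i,j) = r(i,j)" using ag a(2,3) by blast
  qed
  have eq: "Sset (tab h) L = Sset r L" by (rule Sset_agree[OF ag'])
  have "X (tab h) i L = X r i L" if iL: "i \<in> Sset r L" for i
  proof (rule X_agree)
    fix j assume "j < Mc (Suc L)"
    then show "tab h (i, j) = r (i, j)" using ag iL by blast
  qed
  then have "sel (Sset r L) (\<lambda>i. X (tab h) i L) K = sel (Sset r L) (\<lambda>i. X r i L) K"
    by (rule sel_cong)
  then have "out (tab h) = out r" unfolding out_def using eq by simp
  then have "policy h = Output (out r)" unfolding policy_def by (simp only: if_not_P[OF False])
  then show ?thesis by blast
qed

lemma consistent_step:
  assumes "consistent r h"
  shows "consistent r (h @ [(i, r (i, cnt h i))])"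
  unfolding consistent_def
proof (intro allI impI)
  fix k j assume j: "j < cnt (h @ [(i, r (i, cnt h i))]) k"
  show "tab (h @ [(i, r (i, cnt h i))]) (k, j) = r (k, j)"
  proof (cases "k = i")
    case True
    have f: "filter (\<lambda>p. fst p = k) (h @ [(i, r (i, cnt h i))]) = filter (\<lambda>p. fst p = k) h @ [(i, r (i, cnt h i))]"
      using True by simp
    have j': "j < cnt h k \<or> j = cnt h k" using j True unfolding cnt_def by auto
    then show ?thesis
    proof
      assume jl: "j < cnt h k"
      then have "tab (h @ [(i, r (i, cnt h i))]) (k, j) = tab h (k, j)"
        unfolding tab_def using f by (simp add: nth_append cnt_def)
      then show ?thesis using assms jl unfolding consistent_def by simp
    next
      assume je: "j = cnt h k"
      then show ?thesis unfolding tab_def using f True by (simp add: nth_append cnt_def)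
    qed
  next
    case False
    have f: "filter (\<lambda>p. fst p = k) (h @ [(i, r (i, cnt h i))]) = filter (\<lambda>p. fst p = k) h"
      using False by simp
    have "j < cnt h k" using j f unfolding cnt_def by simp
    moreover have "tab (h @ [(i, r (i, cnt h i))]) (k, j) = tab h (k, j)" unfolding tab_def using f by simp
    ultimately show ?thesis using assms unfolding consistent_def by simp
  qed
qed

lemma cnt_step: "cnt (h @ [(i, x)]) k = cnt h k + (if k = i then 1 else 0)"
  unfolding cnt_def by simp

lemma exec_ok:
  assumes "finite S"
  shows "consistent r h \<Longrightarrow> (\<forall>i\<in>S. cnt h i \<le> need r i) \<Longrightarrow> (\<Sum>i\<in>S. need r i - cnt h i) \<le> k
    \<Longrightarrow> exec policy r k h = Some (out r)"
proof (induction k arbitrary: h)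
  case 0
  have "\<forall>i\<in>S. need r i - cnt h i = 0" using 0(3) assms by simp
  then have "\<not> (\<exists>i\<in>S. cnt h i < need r i)" by auto
  then have "policy h = Output (out r)" using policy_cases[OF assms 0(1)] by blast
  then show ?case by simp
next
  case (Suc k)
  from policy_cases[OF assms Suc(2)] show ?case
  proof
    assume "\<exists>i\<in>S. cnt h i < need r i \<and> policy h = Pull i"
    then obtain i where i: "i \<in> S" "cnt h i < need r i" "policy h = Pull i" by blast
    define h' where "h' = h @ [(i, r (i, cnt h i))]"
    have "consistent r h'" unfolding h'_def using consistent_step[OF Suc(2)] .
    moreover have c': "cnt h' j = cnt h j + (if j = i then 1 else 0)" for j
      unfolding h'_def by (rule cnt_step)
    have "\<forall>j\<in>S. cnt h' j \<le> need r j" using Suc(3) i c' by auto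
    moreover have "(\<Sum>j\<in>S. need r j - cnt h' j) \<le> k"
    proof -
      have "(\<Sum>j\<in>S. need r j - cnt h j) = (\<Sum>j\<in>S. need r j - cnt h' j) + 1"
      proof -
        have "(\<Sum>j\<in>S. need r j - cnt h j) = (\<Sum>j\<in>S. (need r j - cnt h' j) + (if j = i then 1 else 0))"
          using i c' by (intro sum.cong) auto
        also have "\<dots> = (\<Sum>j\<in>S. need r j - cnt h' j) + 1"
          using i assms by (simp add: sum.distrib)
        finally show ?thesis .
      qed
      then show ?thesis using Suc(4) by simp
    qed
    ultimately have "exec policy r k h' = Some (out r)" using Suc.IH by blast
    then show ?thesis using i(3) unfolding h'_def cnt_def by simp
  next
    assume "policy h = Output (out r)"
    then show ?thesis by simp
  qed
qed

lemma need_sum: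
  assumes "finite S"
  shows "(\<Sum>i\<in>S. need r i) = (\<Sum>w\<le>L. m w * card (Sset r w))"
proof -
  have "(\<Sum>i\<in>S. need r i) = (\<Sum>w\<le>L. \<Sum>i\<in>S. if i \<in> Sset r w then m w else 0)"
    unfolding need_def by (rule sum.swap)
  also have "\<dots> = (\<Sum>w\<le>L. m w * card (Sset r w))"
  proof (rule sum.cong)
    fix w assume "w \<in> {..L}"
    have "(\<Sum>i\<in>S. if i \<in> Sset r w then m w else 0) = (\<Sum>i\<in>{i\<in>S. i \<in> Sset r w}. m w)"
      using sum.inter_filter[OF assms, of "\<lambda>_. m w" "\<lambda>i. i \<in> Sset r w"] by simp
    also have "{i\<in>S. i \<in> Sset r w} = Sset r w" using Sset_sub by auto
    finally show "(\<Sum>i\<in>S. if i \<in> Sset r w then m w else 0) = m w * card (Sset r w)" by simp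
  qed simp
  finally show ?thesis .
qed

lemma exec_main:
  assumes "finite S" "(\<Sum>w\<le>L. m w * card (Sset r w)) \<le> k"
  shows "exec policy r k [] = Some (out r)"
  using exec_ok[OF assms(1), of r "[]" k] assms need_sum[OF assms(1), of r]
  by (simp add: consistent_def cnt_def)

end


context alg
begin

lemma sz_Suc_le: "sz (Suc w) \<le> sz w"
  unfolding sz_def by (simp add: div_le_mono2)

lemma card_Sset:
  assumes "finite S" shows "card (Sset r w) = sz w"
proof (induction w)
  case 0 then show ?case by (simp add: sz_def)
next
  case (Suc w)
  have "finite (Sset r w)" using assms Sset_sub finite_subset by blast
  then show ?case using sel_card[of "Sset r w" "sz (Suc w)"] Suc sz_Suc_le by simp
qed

lemma finite_Sset: "finite S \<Longrightarrow> finite (Sset r w)"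
  using Sset_sub finite_subset by blast

lemma leave_round:
  assumes "i \<in> Sset r 0" "i \<notin> Sset r k"
  shows "\<exists>w<k. i \<in> Sset r w \<and> i \<notin> Sset r (Suc w)"
  using assms(2)
proof (induction k)
  case 0 then show ?case using assms(1) by simp
next
  case (Suc k)
  show ?case
  proof (cases "i \<in> Sset r k")
    case True then show ?thesis using Suc.prems by auto
  next
    case False
    then obtain w where "w < k" "i \<in> Sset r w \<and> i \<notin> Sset r (Suc w)" using Suc.IH by blast
    then show ?thesis by (intro exI[of _ w]) simp
  qed
qed

lemma good_imp:
  fixes \<theta> :: "nat \<Rightarrow> real" and t :: nat and hi lo :: real
  assumes fin: "finite S"
    and szL: "K \<le> sz L"
    and As: "As = {i\<in>S. hi \<le> \<theta> i}"
    and Bs: "Bs = {i\<in>S. \<theta> i \<le> lo}" "card (S - Bs) \<le> K + t"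
    and gap: "lo + \<phi> \<le> hi"
    and G1: "\<forall>w<L. card {i\<in>Bs. \<theta> i + \<phi>/2 \<le> X r i w} + (K + t) < sz (Suc w)"
    and G2: "card {p\<in>{..L} \<times> As. X r (snd p) (fst p) \<le> \<theta> (snd p) - \<phi>/2} \<le> t"
    and G3: "card {i\<in>Bs. \<theta> i + \<phi>/2 \<le> X r i L} \<le> t"
  shows "card (As - out r) \<le> t \<or> card (out r \<inter> Bs) \<le> t"
proof -
  have finB: "finite Bs" "finite (S - Bs)" using fin Bs(1) by auto
  have finA: "finite As" using fin As by auto
  have claim1: "i \<in> Sset r (Suc w)"
    if w: "w < L" and i: "i \<in> As" "i \<in> Sset r w" and nb: "\<not> X r i w \<le> \<theta> i - \<phi>/2" for w i
  proof (rule ccontr)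
    assume ni: "i \<notin> Sset r (Suc w)"
    have ge: "X r i w \<le> X r j w" if "j \<in> Sset r (Suc w)" for j
    proof -
      have js: "j \<in> sel (Sset r w) (\<lambda>i. X r i w) (sz (Suc w))" using that by simp
      have "i \<notin> sel (Sset r w) (\<lambda>i. X r i w) (sz (Suc w))" using ni by simp
      then show ?thesis using sel_ge[OF finite_Sset[OF fin] i(2) _ js] by blast
    qed
    have sub: "Sset r (Suc w) \<subseteq> (S - Bs) \<union> {j\<in>Bs. \<theta> j + \<phi>/2 \<le> X r j w}"
    proof
      fix j assume j: "j \<in> Sset r (Suc w)"
      have jS: "j \<in> S" using j Sset_sub by blast
      show "j \<in> (S - Bs) \<union> {j\<in>Bs. \<theta> j + \<phi>/2 \<le> X r j w}"
      proof (cases "j \<in> Bs")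
        case True
        have "\<theta> j \<le> lo" using True Bs(1) by simp
        moreover have "hi \<le> \<theta> i" using i(1) As by simp
        moreover have "X r i w \<le> X r j w" using ge[OF j] .
        ultimately have "\<theta> j + \<phi>/2 \<le> X r j w" using nb gap by linarith
        then show ?thesis using True by simp
      qed (use jS in simp)
    qed
    have "card (Sset r (Suc w)) \<le> card ((S - Bs) \<union> {j\<in>Bs. \<theta> j + \<phi>/2 \<le> X r j w})"
      using sub finB by (intro card_mono) auto
    also have "\<dots> \<le> card (S - Bs) + card {j\<in>Bs. \<theta> j + \<phi>/2 \<le> X r j w}" by (rule card_Un_le)
    finally have c1: "card (Sset r (Suc w)) \<le> card (S - Bs) + card {j\<in>Bs. \<theta> j + \<phi>/2 \<le> X r j w}" .
    have c2: "sz (Suc w) = card (Sset r (Suc w))" by (rule card_Sset[OF fin, symmetric])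
    have "sz (Suc w) \<le> K + t + card {j\<in>Bs. \<theta> j + \<phi>/2 \<le> X r j w}"
      using c1 c2 Bs(2) by linarith
    moreover have "card {i\<in>Bs. \<theta> i + \<phi>/2 \<le> X r i w} + (K + t) < sz (Suc w)" using G1 w by blast
    ultimately show False by linarith
  qed
  define PA where "PA = {p\<in>{..L} \<times> As. X r (snd p) (fst p) \<le> \<theta> (snd p) - \<phi>/2}"
  define bA where "bA = {i\<in>As. \<exists>w\<le>L. X r i w \<le> \<theta> i - \<phi>/2}"
  have "bA \<subseteq> snd ` PA"
  proof
    fix i assume "i \<in> bA"
    then obtain w where w: "i \<in> As" "w \<le> L" "X r i w \<le> \<theta> i - \<phi>/2" unfolding bA_def by blast
    then have "(w, i) \<in> PA" unfolding PA_def by simp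
    then show "i \<in> snd ` PA" by (metis image_eqI snd_conv)
  qed
  moreover have "finite PA" unfolding PA_def using finA by auto
  ultimately have cbA: "card bA \<le> t"
  proof -
    have "card bA \<le> card (snd ` PA)" by (rule card_mono) (use \<open>finite PA\<close> \<open>bA \<subseteq> snd ` PA\<close> in auto)
    also have "\<dots> \<le> card PA" by (rule card_image_le[OF \<open>finite PA\<close>])
    finally show ?thesis using G2 unfolding PA_def by linarith
  qed
  have claim2: "\<exists>w<L. X r i w \<le> \<theta> i - \<phi>/2" if i: "i \<in> As" "i \<notin> Sset r L" for i
  proof -
    have "i \<in> Sset r 0" using i As by simp
    then obtain w where w: "w < L" "i \<in> Sset r w" "i \<notin> Sset r (Suc w)"
      using leave_round i(2) by blast
    then show ?thesis using claim1[OF w(1) i(1) w(2)] by blast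
  qed
  show ?thesis
  proof (cases "\<exists>i\<in>(As \<inter> Sset r L) - out r. \<not> X r i L \<le> \<theta> i - \<phi>/2")
    case True
    then obtain i where i: "i \<in> As" "i \<in> Sset r L" "i \<notin> out r" "\<not> X r i L \<le> \<theta> i - \<phi>/2" by blast
    have "out r \<inter> Bs \<subseteq> {j\<in>Bs. \<theta> j + \<phi>/2 \<le> X r j L}"
    proof
      fix j assume j: "j \<in> out r \<inter> Bs"
      have "X r i L \<le> X r j L" using sel_ge[OF finite_Sset[OF fin] i(2), of "\<lambda>i. X r i L" K j] i(3) j
        unfolding out_def by simp
      moreover have "\<theta> j \<le> lo" using j Bs(1) by simp
      moreover have "hi \<le> \<theta> i" using i(1) As by simp
      ultimately have "\<theta> j + \<phi>/2 \<le> X r j L" using i(4) gap by linarith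
      then show "j \<in> {j\<in>Bs. \<theta> j + \<phi>/2 \<le> X r j L}" using j by simp
    qed
    then have "card (out r \<inter> Bs) \<le> card {j\<in>Bs. \<theta> j + \<phi>/2 \<le> X r j L}"
      by (rule card_mono[rotated]) (use finB in auto)
    then have "card (out r \<inter> Bs) \<le> t" using G3 by linarith
    then show ?thesis by simp
  next
    case False
    have "As - out r \<subseteq> bA"
    proof
      fix i assume i: "i \<in> As - out r"
      show "i \<in> bA"
      proof (cases "i \<in> Sset r L")
        case True
        then have "X r i L \<le> \<theta> i - \<phi>/2" using False i by blast
        then show ?thesis unfolding bA_def using i by blast
      next
        case False
        then obtain w where "w < L" "X r i w \<le> \<theta> i - \<phi>/2" using claim2 i by blast
        then have "w \<le> L" "X r i w \<le> \<theta> i - \<phi>/2" by simp_all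
        then show ?thesis unfolding bA_def using i by blast
      qed
    qed
    then have "card (As - out r) \<le> card bA"
      by (rule card_mono[rotated]) (use finA in \<open>auto simp: bA_def\<close>)
    then have "card (As - out r) \<le> t" using cbA by linarith
    then show ?thesis by simp
  qed
qed

end


locale bsetup =
  fixes S :: "nat set" and D :: "nat \<Rightarrow> real measure"
  assumes finS: "finite S"
    and Dprob: "\<And>i. i \<in> S \<Longrightarrow> prob_space (D i)"
    and Dsets: "\<And>i. i \<in> S \<Longrightarrow> sets (D i) = sets borel"
    and Dbd: "\<And>i. i \<in> S \<Longrightarrow> AE x in D i. 0 \<le> x \<and> x \<le> 1"
begin

definition D' :: "nat \<times> nat \<Rightarrow> real measure" where
  "D' p = (if fst p \<in> S then D (fst p) else return borel 0)"

abbreviation \<Omega> :: "(nat \<times> nat \<Rightarrow> real) measure" where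
  "\<Omega> \<equiv> PiM (S \<times> UNIV) D'"

lemma \<Omega>_eq: "PiM (S \<times> UNIV) (\<lambda>p. D (fst p)) = \<Omega>"
  by (rule PiM_cong) (auto simp: D'_def)

lemma D'_prob: "prob_space (D' p)"
  unfolding D'_def using Dprob by (auto simp: prob_space_return)

lemma D'_sets: "sets (D' p) = sets borel"
  unfolding D'_def using Dsets by auto

sublocale P: product_prob_space D' "S \<times> UNIV"
  unfolding product_prob_space_def product_prob_space_axioms_def product_sigma_finite_def
  using D'_prob prob_space_imp_sigma_finite by auto

lemma prob_\<Omega>: "prob_space \<Omega>"
  by (rule P.prob_space_axioms)

lemma coord_meas: assumes p: "p \<in> S \<times> UNIV" shows "(\<lambda>r. r p) \<in> borel_measurable \<Omega>"
proof -
  have "(\<lambda>x. x p) \<in> \<Omega> \<rightarrow>\<^sub>M D' p" by (rule measurable_component_singleton[OF p])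
  moreover have "\<Omega> \<rightarrow>\<^sub>M D' p = \<Omega> \<rightarrow>\<^sub>M borel" by (rule measurable_cong_sets[OF refl D'_sets])
  ultimately show ?thesis by simp
qed

lemma coord_distr: "p \<in> S \<times> UNIV \<Longrightarrow> distr \<Omega> borel (\<lambda>r. r p) = D (fst p)"
proof -
  assume p: "p \<in> S \<times> UNIV"
  have "distr \<Omega> borel (\<lambda>r. r p) = distr \<Omega> (D' p) (\<lambda>r. r p)"
    by (rule distr_cong) (auto simp: D'_sets)
  also have "\<dots> = D' p" by (rule P.PiM_component[OF p])
  finally show ?thesis using p by (auto simp: D'_def)
qed

lemma indep_coords:
  assumes J: "finite J" "J \<subseteq> S \<times> UNIV" "J \<noteq> {}"
  shows "prob_space.indep_vars \<Omega> (\<lambda>_. borel) (\<lambda>p r. r p) J"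
proof -
  have rv: "(\<lambda>r. r p) \<in> borel_measurable \<Omega>" if "p \<in> J" for p
    using coord_meas that J by blast
  have "distr \<Omega> (\<Pi>\<^sub>M p\<in>J. borel) (\<lambda>x. \<lambda>p\<in>J. x p) = distr \<Omega> (PiM J D') (\<lambda>x. restrict x J)"
    by (rule distr_cong) (auto simp: D'_sets restrict_def intro!: sets_PiM_cong)
  also have "\<dots> = PiM J D'" by (rule P.distr_PiM_restrict_finite[OF J(1,2)])
  also have "\<dots> = (\<Pi>\<^sub>M p\<in>J. distr \<Omega> borel (\<lambda>x. x p))"
  proof (rule PiM_cong)
    fix p assume "p \<in> J"
    then have p: "p \<in> S \<times> UNIV" using J by auto
    have "distr \<Omega> borel (\<lambda>r. r p) = distr \<Omega> (D' p) (\<lambda>r. r p)"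
      by (rule distr_cong) (auto simp: D'_sets)
    also have "\<dots> = D' p" by (rule P.PiM_component[OF p])
    finally show "D' p = distr \<Omega> borel (\<lambda>x. x p)" by simp
  qed simp
  finally show ?thesis using P.P.indep_vars_iff_distr_eq_PiM'[OF J(3) rv] by simp
qed

lemma hoeffding:
  assumes i: "i \<in> S" and J: "finite J" "J \<noteq> {}" and e: "e \<ge> 0"
  shows "measure \<Omega> {r\<in>space \<Omega>. mean (D i) + e \<le> (\<Sum>t\<in>J. r (i,t)) / real (card J)}
           \<le> exp (- 2 * real (card J) * e\<^sup>2)"
    and "measure \<Omega> {r\<in>space \<Omega>. (\<Sum>t\<in>J. r (i,t)) / real (card J) \<le> mean (D i) - e}
           \<le> exp (- 2 * real (card J) * e\<^sup>2)"
proof -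
  obtain t0 where t0: "t0 \<in> J" using J by auto
  define I where "I = {i} \<times> J"
  have I: "finite I" "I \<subseteq> S \<times> UNIV" "I \<noteq> {}" using J i unfolding I_def by auto
  have dY: "distr \<Omega> borel (\<lambda>r. r (i, t0)) = D i" using coord_distr[of "(i,t0)"] i by simp
  interpret H: Hoeffding_ineq_iid \<Omega> I "\<lambda>p r. r p" "\<lambda>r. r (i, t0)" 0 1 "P.P.expectation (\<lambda>r. r (i, t0))"
  proof unfold_locales
    show "finite I" by fact
    show "P.P.indep_vars (\<lambda>_. borel) (\<lambda>p r. r p) I" by (rule indep_coords[OF I])
    show "distr \<Omega> borel (\<lambda>r. r p) = distr \<Omega> borel (\<lambda>r. r (i, t0))" if "p \<in> I" for p
      using coord_distr[of p] coord_distr[of "(i,t0)"] that i unfolding I_def by auto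
    show "(\<lambda>r. r (i, t0)) \<in> borel_measurable \<Omega>" using coord_meas[of "(i,t0)"] i by simp
    have "AE x in distr \<Omega> borel (\<lambda>r. r (i, t0)). x \<in> {0..1}" unfolding dY using Dbd[OF i] by simp
    then show "AE x in \<Omega>. x (i, t0) \<in> {0..1}"
      using AE_distr_iff[of "\<lambda>r. r (i, t0)" \<Omega> borel "\<lambda>x. x \<in> {0..1}"] coord_meas[of "(i,t0)"] i by simp
  qed simp
  have mu: "P.P.expectation (\<lambda>r. r (i, t0)) = mean (D i)"
  proof -
    have "P.P.expectation (\<lambda>r. r (i, t0)) = integral\<^sup>L (distr \<Omega> borel (\<lambda>r. r (i, t0))) (\<lambda>x. x)"
      using coord_meas[of "(i,t0)"] i by (intro integral_distr[symmetric]) auto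
    then show ?thesis using dY unfolding mean_def by simp
  qed
  have sumI: "(\<Sum>p\<in>I. r p) = (\<Sum>t\<in>J. r (i,t))" for r :: "nat \<times> nat \<Rightarrow> real"
  proof -
    have "{i} \<times> J = (\<lambda>t. (i,t)) ` J" by auto
    moreover have "inj_on (\<lambda>t. (i,t)) J" by (auto simp: inj_on_def)
    ultimately show ?thesis unfolding I_def by (simp add: sum.reindex)
  qed
  have cI: "card I = card J" unfolding I_def by (simp add: card_cartesian_product)
  show "measure \<Omega> {r\<in>space \<Omega>. mean (D i) + e \<le> (\<Sum>t\<in>J. r (i,t)) / real (card J)}
           \<le> exp (- 2 * real (card J) * e\<^sup>2)"
    using H.Hoeffding_ineq_ge'[OF e _ I(3)] unfolding mu sumI cI by simp
  show "measure \<Omega> {r\<in>space \<Omega>. (\<Sum>t\<in>J. r (i,t)) / real (card J) \<le> mean (D i) - e}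
           \<le> exp (- 2 * real (card J) * e\<^sup>2)"
    using H.Hoeffding_ineq_le'[OF e _ I(3)] unfolding mu sumI cI by simp
qed

end

lemma (in prob_space) count_markov:
  assumes F: "finite F" and E: "\<And>i. i \<in> F \<Longrightarrow> E i \<in> events" and c: "c > 0"
  shows "prob {x\<in>space M. c \<le> real (card {i\<in>F. x \<in> E i})} \<le> (\<Sum>i\<in>F. prob (E i)) / c"
proof -
  define u where "u = (\<lambda>x. \<Sum>i\<in>F. indicator (E i) x :: real)"
  have cu: "real (card {i\<in>F. x \<in> E i}) = u x" for x
  proof -
    have "u x = (\<Sum>i\<in>{i\<in>F. x \<in> E i}. 1)"
      unfolding u_def using sum.inter_filter[OF F, of "\<lambda>_. 1::real" "\<lambda>i. x\<in>E i"] by (simp add: indicator_def of_bool_def)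
    then show ?thesis by simp
  qed
  have int: "integrable M u" unfolding u_def
  proof (rule Bochner_Integration.integrable_sum)
    fix i assume "i \<in> F"
    then show "integrable M (indicator (E i) :: 'a \<Rightarrow> real)"
      using E by (intro integrable_real_indicator) (auto simp: emeasure_eq_measure)
  qed
  have "prob {x\<in>space M. c \<le> u x} \<le> (\<integral>x. u x \<partial>M) / c"
    by (rule integral_Markov_inequality_measure[OF int _ _ c, where A="space M"])
       (auto simp: u_def intro!: sum_nonneg)
  also have "(\<integral>x. u x \<partial>M) = (\<Sum>i\<in>F. prob (E i))"
    unfolding u_def using E by (subst Bochner_Integration.integral_sum) (auto simp: emeasure_eq_measure)
  finally show ?thesis unfolding cu .
qed



lemma geom_half: "(\<Sum>w<N. (1/2::real)^w) \<le> 2"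
proof -
  have "(\<Sum>w<N. (1/2::real)^w) = 2 - 2 * (1/2)^N"
    by (induction N) (auto simp: field_simps)
  then show ?thesis by simp
qed

lemma geom_lin: "(\<Sum>w<N. real w * (1/2::real)^w) \<le> 2"
proof -
  have "(\<Sum>w<N. real w * (1/2::real)^w) = 2 - 2 * (real N + 1) * (1/2)^N"
  proof (induction N)
    case (Suc N)
    have "(\<Sum>w<Suc N. real w * (1/2::real)^w) = (\<Sum>w<N. real w * (1/2::real)^w) + real N * (1/2)^N" by simp
    also have "\<dots> = 2 - 2 * (real N + 1) * (1/2)^N + real N * (1/2)^N" using Suc by simp
    also have "\<dots> = 2 - 2 * (real (Suc N) + 1) * (1/2)^(Suc N)" by (simp add: algebra_simps)
    finally show ?case .
  qed simp
  moreover have "0 \<le> 2 * (real N + 1) * (1/2::real)^N" by simp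
  ultimately show ?thesis by linarith
qed

lemma sum_lin: "(\<Sum>w\<in>A. c * (a * x w + b * y w)) = c * (a * (\<Sum>w\<in>A. x w) + b * (\<Sum>w\<in>A. y w :: real))"
  by (simp add: sum_distrib_left sum.distrib algebra_simps)

locale nums = alg S K \<tau> \<phi> \<delta> for S K \<tau> \<phi> \<delta> +
  fixes t :: nat
  assumes finS': "finite S"
    and K1: "1 \<le> K" and tau: "0 < \<tau>" "\<tau> \<le> 1/2" and tK: "\<tau> * real K = real t"
    and phi: "0 < \<phi>" "\<phi> \<le> 1" and delta: "0 < \<delta>" "\<delta> \<le> 1/2"
    and nS: "K + t + 1 \<le> card S"
begin

lemma t_pos: "1 \<le> t"
proof -
  have "0 < \<tau> * real K" using tau K1 by simp
  then show ?thesis using tK by simp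
qed

lemma t_le: "2 * t \<le> K"
proof -
  have "real t \<le> real K / 2" using tK tau K1 by (simp add: mult_right_mono flip: tK)
  then show ?thesis by linarith
qed

definition lam :: real where "lam = ln (1/\<tau>) + ln (1/\<delta>)"

lemma ln2_ge: "1/2 \<le> ln (2::real)"
proof -
  have "ln (1/2::real) \<le> 1/2 - 1" by (rule ln_le_minus_one) simp
  then show ?thesis by (simp add: ln_div)
qed

lemma lam_ge: "1 \<le> lam"
proof -
  have "ln 2 \<le> ln (1/\<tau>)" using tau by (subst ln_le_cancel_iff) (auto simp: field_simps)
  moreover have "ln 2 \<le> ln (1/\<delta>)" using delta by (subst ln_le_cancel_iff) (auto simp: field_simps)
  ultimately show ?thesis unfolding lam_def using ln2_ge by linarith
qed

lemma m_ge: "2 / \<phi>\<^sup>2 * (lam + real (2*w+8) * ln 2) \<le> real (m w)"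
proof -
  have "2 / \<phi>\<^sup>2 * (lam + real (2*w+8) * ln 2) \<le> real_of_int \<lceil>2 / \<phi>\<^sup>2 * (lam + real (2*w+8) * ln 2)\<rceil>"
    by (rule le_of_int_ceiling)
  also have "\<dots> = real (m w)"
  proof -
    have "0 \<le> 2 / \<phi>\<^sup>2 * (lam + real (2*w+8) * ln 2)" using lam_ge phi by (intro mult_nonneg_nonneg) auto
    then show ?thesis unfolding m_def lam_def by (simp add: add.assoc)
  qed
  finally show ?thesis .
qed

lemma m_le: "real (m w) \<le> 2 / \<phi>\<^sup>2 * (lam + real (2*w+8) * ln 2) + 1"
proof -
  have "0 \<le> 2 / \<phi>\<^sup>2 * (lam + real (2*w+8) * ln 2)" using lam_ge phi by (intro mult_nonneg_nonneg) auto
  then have "real (m w) = real_of_int \<lceil>2 / \<phi>\<^sup>2 * (lam + real (2*w+8) * ln 2)\<rceil>"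
    unfolding m_def lam_def by (simp add: add.assoc)
  also have "\<dots> \<le> 2 / \<phi>\<^sup>2 * (lam + real (2*w+8) * ln 2) + 1" by linarith
  finally show ?thesis .
qed

lemma m_pos: "0 < m w"
proof -
  have "0 \<le> real (2*w+8) * ln 2" using ln2_ge by (intro mult_nonneg_nonneg) auto
  then have "0 < lam + real (2*w+8) * ln 2" using lam_ge by linarith
  then have "0 < 2 / \<phi>\<^sup>2 * (lam + real (2*w+8) * ln 2)" using phi by simp
  then show ?thesis using m_ge[of w] by linarith
qed

lemma eps_bound: "exp (- 2 * real (m w) * (\<phi>/2)\<^sup>2) \<le> \<tau> * \<delta> / 2^(2*w+8)"
proof -
  have "lam + real (2*w+8) * ln 2 \<le> real (m w) * \<phi>\<^sup>2 / 2"
    using m_ge[of w] phi by (simp add: field_simps)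
  then have "exp (- 2 * real (m w) * (\<phi>/2)\<^sup>2) \<le> exp (- (lam + real (2*w+8) * ln 2))"
    by (simp add: power_divide field_simps)
  also have "exp (- (lam + real (2*w+8) * ln 2)) = \<tau> * \<delta> / 2^(2*w+8)"
  proof -
    have "real (2*w+8) * ln 2 = ln ((2::real)^(2*w+8))" by (simp add: ln_realpow)
    then have "lam + real (2*w+8) * ln 2 = ln (2^(2*w+8) / (\<tau> * \<delta>))"
      unfolding lam_def using tau delta by (simp add: ln_div ln_mult)
    then show ?thesis using tau delta by (simp add: exp_minus)
  qed
  finally show ?thesis .
qed

lemma L_ex: "card S div 2^(Suc L) < 4*K"
proof -
  have "card S div 2^(Suc (card S)) < 4*K"
  proof -
    have "card S < 2^(Suc (card S))" by (rule less_trans[OF less_exp]) simp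
    then show ?thesis using K1 by simp
  qed
  then show ?thesis unfolding L_def by (rule LeastI)
qed

lemma L_lt: "w < L \<Longrightarrow> 4*K \<le> sz (Suc w)"
  unfolding sz_def using not_less_Least[of w "\<lambda>w. card S div 2^(Suc w) < 4*K"] unfolding L_def by simp

lemma szL: "K \<le> sz L"
proof (cases L)
  case 0 then show ?thesis using nS by (simp add: sz_def)
next
  case (Suc w)
  then have "4*K \<le> sz (Suc w)" using L_lt by simp
  then show ?thesis using Suc by simp
qed

lemma n_lt: "real (card S) < 2^(L+3) * real K"
proof -
  have "card S div 2^(Suc L) < 4*K" by (rule L_ex)
  then have "card S < 2^(Suc L) * (4*K)" by (simp add: div_less_iff_less_mult mult_ac)
  then have "real (card S) < real (2^(Suc L) * (4*K))" by (simp only: of_nat_less_iff)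
  then have "real (card S) < 2^(Suc L) * (4 * real K)" by simp
  then show ?thesis by (simp add: power_add)
qed

lemma sz_lower: "1 \<le> sz w \<Longrightarrow> real (card S) / 2^(w+1) \<le> real (sz w)"
proof -
  assume a: "1 \<le> sz w"
  have m1: "card S mod 2^w < 2^w" by simp
  have m2: "card S = card S div 2^w * 2^w + card S mod 2^w" by (rule div_mult_mod_eq[symmetric])
  have "card S < (card S div 2^w + 1) * 2^w"
  proof -
    have "(card S div 2^w + 1) * 2^w = card S div 2^w * 2^w + 2^w" by (simp add: ring_distribs)
    then show ?thesis using m1 m2 by linarith
  qed
  then have "real (card S) < real ((card S div 2^w + 1) * 2^w)" by (simp only: of_nat_less_iff)
  then have "real (card S) < (real (sz w) + 1) * 2^w" unfolding sz_def by (simp add: ring_distribs)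
  also have "\<dots> \<le> (2 * real (sz w)) * 2^w" using a by (intro mult_right_mono) auto
  finally show ?thesis by (simp add: field_simps)
qed

lemma sz_upper: "real (sz w) \<le> real (card S) / 2^w"
proof -
  have "(card S div 2^w) * 2^w \<le> card S" by (rule div_times_less_eq_dividend)
  then have "real (card S div 2^w * 2^w) \<le> real (card S)" by (simp only: of_nat_le_iff)
  then have "real (card S div 2^w) * 2^w \<le> real (card S)" by simp
  then show ?thesis by (simp add: sz_def field_simps)
qed

definition N :: nat where "N = nat \<lfloor>50 * real (card S) / \<phi>\<^sup>2 * (ln (1 / \<tau>) + ln (1 / \<delta>))\<rfloor>"

lemma budget: "(\<Sum>w\<le>L. m w * card (Sset r w)) \<le> N"
proof -
  have cs: "card (Sset r w) = sz w" for w
  proof (induction w)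
    case 0 then show ?case by (simp add: sz_def)
  next
    case (Suc w)
    have "finite (Sset r w)" using finS' Sset_sub finite_subset by blast
    moreover have "sz (Suc w) \<le> sz w" unfolding sz_def by (simp add: div_le_mono2)
    ultimately show ?case using sel_card[of "Sset r w" "sz (Suc w)"] Suc by simp
  qed
  define n where "n = real (card S)"
  have n0: "0 \<le> n" unfolding n_def by simp
  have tm: "real (m w * card (Sset r w)) \<le> n / \<phi>\<^sup>2 * ((2*lam + 17) * (1/2)^w + 4 * (real w * (1/2)^w))" for w
  proof -
    have "real (m w * card (Sset r w)) = real (m w) * real (sz w)" using cs by simp
    also have "\<dots> \<le> (2 / \<phi>\<^sup>2 * (lam + real (2*w+8) * ln 2) + 1) * (n / 2^w)"
    proof (rule mult_mono)
      have "0 \<le> real (2*w+8) * ln 2" using ln2_ge by (intro mult_nonneg_nonneg) auto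
      then show "0 \<le> 2 / \<phi>\<^sup>2 * (lam + real (2*w+8) * ln 2) + 1" using lam_ge phi by (intro add_nonneg_nonneg mult_nonneg_nonneg) auto
    qed (use m_le sz_upper n_def in auto)
    also have "\<dots> \<le> (2 / \<phi>\<^sup>2 * (lam + real (2*w+8)) + 1 / \<phi>\<^sup>2) * (n / 2^w)"
    proof (intro mult_right_mono add_mono)
      have "ln (2::real) \<le> 1" using ln_2_less_1 by simp
      then have "real (2*w+8) * ln 2 \<le> real (2*w+8)" by (simp add: mult_left_le)
      then show "2 / \<phi>\<^sup>2 * (lam + real (2*w+8) * ln 2) \<le> 2 / \<phi>\<^sup>2 * (lam + real (2*w+8))"
        using phi by (intro mult_left_mono) auto
      show "1 \<le> 1 / \<phi>\<^sup>2" using phi by (simp add: field_simps power_le_one)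
    qed (use n0 in auto)
    also have "\<dots> = n / \<phi>\<^sup>2 * ((2*lam + 17) * (1/2)^w + 4 * (real w * (1/2)^w))"
      using phi by (simp add: field_simps power_divide)
    finally show ?thesis .
  qed
  have "real (\<Sum>w\<le>L. m w * card (Sset r w)) = (\<Sum>w<Suc L. real (m w * card (Sset r w)))"
    by (simp add: lessThan_Suc_atMost)
  also have "\<dots> \<le> (\<Sum>w<Suc L. n / \<phi>\<^sup>2 * ((2*lam + 17) * (1/2)^w + 4 * (real w * (1/2)^w)))"
    by (intro sum_mono tm)
  also have "\<dots> = n / \<phi>\<^sup>2 * ((2*lam + 17) * (\<Sum>w<Suc L. (1/2)^w) + 4 * (\<Sum>w<Suc L. real w * (1/2)^w))"
    by (rule sum_lin)
  also have "\<dots> \<le> n / \<phi>\<^sup>2 * ((2*lam + 17) * 2 + 4 * 2)"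
    using geom_half[of "Suc L"] geom_lin[of "Suc L"] lam_ge n0 phi
    by (intro mult_left_mono add_mono mult_left_mono) auto
  also have "\<dots> \<le> 50 * n / \<phi>\<^sup>2 * lam"
  proof -
    have "(2*lam + 17) * 2 + 4 * 2 \<le> 50 * lam" using lam_ge by (simp add: ring_distribs)
    then have "n / \<phi>\<^sup>2 * ((2*lam + 17) * 2 + 4 * 2) \<le> n / \<phi>\<^sup>2 * (50 * lam)"
      using n0 phi by (intro mult_left_mono) auto
    then show ?thesis by (simp add: field_simps)
  qed
  finally have "real (\<Sum>w\<le>L. m w * card (Sset r w)) \<le> 50 * real (card S) / \<phi>\<^sup>2 * (ln (1 / \<tau>) + ln (1 / \<delta>))"
    unfolding n_def lam_def .
  then show ?thesis unfolding N_def by (simp add: le_nat_floor)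
qed

end


lemma card_filter_sum: "finite Z \<Longrightarrow> real (card {j\<in>Z. P j}) = (\<Sum>j\<in>Z. if P j then 1 else 0)"
  using sum.inter_filter[of Z "\<lambda>_. 1::real" P] by simp

lemma sel_set_meas:
  assumes Z: "finite Z" and v: "\<And>i. i \<in> Z \<Longrightarrow> v i \<in> borel_measurable M"
  shows "{x\<in>space M. sel Z (\<lambda>i. v i x) k = Y} \<in> sets M"
proof -
  define v' where "v' i = (if i \<in> Z then v i else (\<lambda>_. 0::real))" for i
  have mv[measurable]: "v' i \<in> borel_measurable M" for i using v unfolding v'_def by auto
  have eqv: "sel Z (\<lambda>i. v i x) k = sel Z (\<lambda>i. v' i x) k" for x
    by (rule sel_cong) (simp add: v'_def)
  have rk: "real (rank Z (\<lambda>i. v' i x) i) =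
      (\<Sum>j\<in>Z. if v' i x < v' j x \<or> (v' j x = v' i x \<and> j < i) then 1 else 0)" for x i
    unfolding rank_def bef_def using card_filter_sum[OF Z] by simp
  have eq: "sel Z (\<lambda>i. v' i x) k = Y \<longleftrightarrow> Y \<subseteq> Z \<and>
      (\<forall>i\<in>Z. i \<in> Y \<longleftrightarrow> (\<Sum>j\<in>Z. if v' i x < v' j x \<or> (v' j x = v' i x \<and> j < i) then 1 else 0::real) < real k)" for x
    unfolding sel_def rk[symmetric] by auto
  have "Measurable.pred M (\<lambda>x. Y \<subseteq> Z \<and>
      (\<forall>i\<in>Z. i \<in> Y \<longleftrightarrow> (\<Sum>j\<in>Z. if v' i x < v' j x \<or> (v' j x = v' i x \<and> j < i) then 1 else 0::real) < real k))"
    using Z by measurable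
  then have "Measurable.pred M (\<lambda>x. sel Z (\<lambda>i. v i x) k = Y)" unfolding eqv eq .
  then show ?thesis by (simp add: pred_def)
qed

lemma (in prob_space) count_set_meas:
  assumes F: "finite F" and E: "\<And>i. i \<in> F \<Longrightarrow> E i \<in> events"
  shows "{x\<in>space M. c \<le> real (card {i\<in>F. x \<in> E i})} \<in> events"
proof -
  have "(\<lambda>x. (\<Sum>i\<in>F. indicator (E i) x :: real)) \<in> borel_measurable M"
    using E by (intro borel_measurable_sum) auto
  then have "{x\<in>space M. c \<le> (\<Sum>i\<in>F. indicator (E i) x :: real)} \<in> events" by measurable
  moreover have "real (card {i\<in>F. x \<in> E i}) = (\<Sum>i\<in>F. indicator (E i) x :: real)" for x
    using card_filter_sum[OF F, of "\<lambda>i. x \<in> E i"] by (simp add: indicator_def of_bool_def)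
  ultimately show ?thesis by simp
qed

locale full = nums S K \<tau> \<phi> \<delta> t + bsetup S D for S K \<tau> \<phi> \<delta> t D
begin

lemma X_meas: "i \<in> S \<Longrightarrow> (\<lambda>r. X r i w) \<in> borel_measurable \<Omega>"
  unfolding X_def by (intro borel_measurable_divide borel_measurable_sum borel_measurable_const coord_meas) auto

lemma Sset_meas: "{r\<in>space \<Omega>. Sset r w = Y} \<in> sets \<Omega>"
proof (induction w arbitrary: Y)
  case 0
  have e: "{r\<in>space \<Omega>. Sset r 0 = Y} = {r\<in>space \<Omega>. S = Y}" by simp
  show ?case unfolding e by (cases "S = Y") simp_all
next
  case (Suc w)
  have "{r\<in>space \<Omega>. Sset r (Suc w) = Y} =
      (\<Union>Z\<in>Pow S. {r\<in>space \<Omega>. Sset r w = Z} \<inter> {r\<in>space \<Omega>. sel Z (\<lambda>i. X r i w) (sz (Suc w)) = Y})"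
  proof (intro set_eqI iffI)
    fix r assume r: "r \<in> {r\<in>space \<Omega>. Sset r (Suc w) = Y}"
    show "r \<in> (\<Union>Z\<in>Pow S. {r\<in>space \<Omega>. Sset r w = Z} \<inter> {r\<in>space \<Omega>. sel Z (\<lambda>i. X r i w) (sz (Suc w)) = Y})"
    proof (rule UN_I[of "Sset r w"])
      show "Sset r w \<in> Pow S" using Sset_sub[of r w] by simp
      show "r \<in> {r'\<in>space \<Omega>. Sset r' w = Sset r w} \<inter> {r'\<in>space \<Omega>. sel (Sset r w) (\<lambda>i. X r' i w) (sz (Suc w)) = Y}"
        using r by simp
    qed
  next
    fix r assume "r \<in> (\<Union>Z\<in>Pow S. {r\<in>space \<Omega>. Sset r w = Z} \<inter> {r\<in>space \<Omega>. sel Z (\<lambda>i. X r i w) (sz (Suc w)) = Y})"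
    then obtain Z where "r \<in> space \<Omega>" "Sset r w = Z" "sel Z (\<lambda>i. X r i w) (sz (Suc w)) = Y" by blast
    then show "r \<in> {r\<in>space \<Omega>. Sset r (Suc w) = Y}" by simp
  qed
  also have "\<dots> \<in> sets \<Omega>"
  proof (rule sets.finite_UN)
    show "finite (Pow S)" using finS by simp
    fix Z assume Z: "Z \<in> Pow S"
    have "{r\<in>space \<Omega>. sel Z (\<lambda>i. X r i w) (sz (Suc w)) = Y} \<in> sets \<Omega>"
      using Z finS by (intro sel_set_meas) (auto intro: finite_subset X_meas)
    then show "{r\<in>space \<Omega>. Sset r w = Z} \<inter> {r\<in>space \<Omega>. sel Z (\<lambda>i. X r i w) (sz (Suc w)) = Y} \<in> sets \<Omega>"
      using Suc.IH by auto
  qed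
  finally show ?case .
qed

lemma out_meas: "{r\<in>space \<Omega>. out r = Y} \<in> sets \<Omega>"
proof -
  have "{r\<in>space \<Omega>. out r = Y} =
      (\<Union>Z\<in>Pow S. {r\<in>space \<Omega>. Sset r L = Z} \<inter> {r\<in>space \<Omega>. sel Z (\<lambda>i. X r i L) K = Y})"
  proof (intro set_eqI iffI)
    fix r assume r: "r \<in> {r\<in>space \<Omega>. out r = Y}"
    show "r \<in> (\<Union>Z\<in>Pow S. {r\<in>space \<Omega>. Sset r L = Z} \<inter> {r\<in>space \<Omega>. sel Z (\<lambda>i. X r i L) K = Y})"
    proof (rule UN_I[of "Sset r L"])
      show "Sset r L \<in> Pow S" using Sset_sub[of r L] by simp
      show "r \<in> {r'\<in>space \<Omega>. Sset r' L = Sset r L} \<inter> {r'\<in>space \<Omega>. sel (Sset r L) (\<lambda>i. X r' i L) K = Y}"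
        using r unfolding out_def by simp
    qed
  next
    fix r assume "r \<in> (\<Union>Z\<in>Pow S. {r\<in>space \<Omega>. Sset r L = Z} \<inter> {r\<in>space \<Omega>. sel Z (\<lambda>i. X r i L) K = Y})"
    then obtain Z where "r \<in> space \<Omega>" "Sset r L = Z" "sel Z (\<lambda>i. X r i L) K = Y" by blast
    then show "r \<in> {r\<in>space \<Omega>. out r = Y}" unfolding out_def by simp
  qed
  also have "\<dots> \<in> sets \<Omega>"
  proof (rule sets.finite_UN)
    show "finite (Pow S)" using finS by simp
    fix Z assume Z: "Z \<in> Pow S"
    have "{r\<in>space \<Omega>. sel Z (\<lambda>i. X r i L) K = Y} \<in> sets \<Omega>"
      using Z finS by (intro sel_set_meas) (auto intro: finite_subset X_meas)
    then show "{r\<in>space \<Omega>. Sset r L = Z} \<inter> {r\<in>space \<Omega>. sel Z (\<lambda>i. X r i L) K = Y} \<in> sets \<Omega>"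
      using Sset_meas by auto
  qed
  finally show ?thesis .
qed

lemma out_pred_meas: "{r\<in>space \<Omega>. P (out r)} \<in> sets \<Omega>"
proof -
  have "{r\<in>space \<Omega>. P (out r)} = (\<Union>Y\<in>{Y\<in>Pow S. P Y}. {r\<in>space \<Omega>. out r = Y})"
  proof (intro set_eqI iffI)
    fix r assume r: "r \<in> {r\<in>space \<Omega>. P (out r)}"
    have "out r \<subseteq> S" unfolding out_def using sel_subset Sset_sub by (meson subset_trans)
    then show "r \<in> (\<Union>Y\<in>{Y\<in>Pow S. P Y}. {r\<in>space \<Omega>. out r = Y})" using r by blast
  qed blast
  also have "\<dots> \<in> sets \<Omega>" using finS out_meas by (intro sets.finite_UN) auto
  finally show ?thesis .
qed

end


lemma mean_bd:
  assumes "prob_space M" "sets M = sets borel" "AE x in M. 0 \<le> x \<and> x \<le> (1::real)"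
  shows "0 \<le> mean M \<and> mean M \<le> 1"
proof
  interpret prob_space M by fact
  show "0 \<le> mean M" unfolding mean_def using assms(3) by (intro integral_nonneg_AE) auto
  have "(\<integral>x. x \<partial>M) \<le> (\<integral>x. 1 \<partial>M)"
  proof (rule integral_mono_AE')
    show "integrable M (\<lambda>x. 1::real)" by simp
  qed (use assms(3) in auto)
  then show "mean M \<le> 1" unfolding mean_def by (simp add: prob_space)
qed

lemma bad1_num:
  fixes n c e a :: real
  assumes n: "0 < n" and c: "n / 2^(w+3) \<le> c" and e: "e = a / 2^(2*w+8)" and a: "0 \<le> a"
  shows "n * e / c \<le> a / 32 * (1/2)^w"
proof -
  have np: "0 < n / 2^(w+3)" using n by simp
  have cpos: "0 < c" using np c by linarith
  have ne: "0 \<le> n * e" using n a e by simp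
  have "n * e / c \<le> n * e / (n / 2^(w+3))"
    by (rule divide_left_mono[OF c ne]) (use mult_pos_pos[OF cpos np] in simp)
  also have "\<dots> = e * 2^(w+3)" using n by simp
  also have "\<dots> = a / 32 * (1/2)^w"
  proof -
    have h: "(2::real)^(2*w+8) = 2^w * 2^w * 256"
    proof -
      have "2*w+8 = w + w + 8" by simp
      then show ?thesis by (simp only: power_add) simp
    qed
    show ?thesis unfolding e h by (simp add: power_add field_simps)
  qed
  finally show ?thesis .
qed

context full
begin

abbreviation \<theta> :: "nat \<Rightarrow> real" where "\<theta> i \<equiv> mean (D i)"

definition EB :: "nat \<Rightarrow> nat \<Rightarrow> (nat \<times> nat \<Rightarrow> real) set" where
  "EB i w = {r\<in>space \<Omega>. \<theta> i + \<phi>/2 \<le> X r i w}"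
definition EA :: "nat \<Rightarrow> nat \<Rightarrow> (nat \<times> nat \<Rightarrow> real) set" where
  "EA i w = {r\<in>space \<Omega>. X r i w \<le> \<theta> i - \<phi>/2}"

lemma EB_meas: "i \<in> S \<Longrightarrow> EB i w \<in> sets \<Omega>"
  unfolding EB_def using X_meas by measurable
lemma EA_meas: "i \<in> S \<Longrightarrow> EA i w \<in> sets \<Omega>"
  unfolding EA_def using X_meas by measurable

lemma X_sum: "X r i w = (\<Sum>t\<in>{Mc w..<Mc w + m w}. r (i,t)) / real (card {Mc w..<Mc w + m w})"
proof -
  have "(\<Sum>t\<in>{0 + Mc w..<m w + Mc w}. r (i,t)) = (\<Sum>t\<in>{0..<m w}. r (i, t + Mc w))"
    by (rule sum.shift_bounds_nat_ivl)
  then have "(\<Sum>t\<in>{Mc w..<Mc w + m w}. r (i,t)) = (\<Sum>t<m w. r (i, Mc w + t))"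
    by (simp add: add.commute atLeast0LessThan)
  then show ?thesis unfolding X_def by simp
qed

lemma pEB: "i \<in> S \<Longrightarrow> measure \<Omega> (EB i w) \<le> \<tau> * \<delta> / 2^(2*w+8)"
proof -
  assume i: "i \<in> S"
  have J: "finite {Mc w..<Mc w + m w}" "{Mc w..<Mc w + m w} \<noteq> {}" using m_pos[of w] by auto
  have "measure \<Omega> (EB i w) \<le> exp (- 2 * real (card {Mc w..<Mc w + m w}) * (\<phi>/2)\<^sup>2)"
    unfolding EB_def X_sum using hoeffding(1)[OF i J, of "\<phi>/2"] phi by simp
  also have "\<dots> \<le> \<tau> * \<delta> / 2^(2*w+8)" using eps_bound[of w] by simp
  finally show ?thesis .
qed

lemma pEA: "i \<in> S \<Longrightarrow> measure \<Omega> (EA i w) \<le> \<tau> * \<delta> / 2^(2*w+8)"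
proof -
  assume i: "i \<in> S"
  have J: "finite {Mc w..<Mc w + m w}" "{Mc w..<Mc w + m w} \<noteq> {}" using m_pos[of w] by auto
  have "measure \<Omega> (EA i w) \<le> exp (- 2 * real (card {Mc w..<Mc w + m w}) * (\<phi>/2)\<^sup>2)"
    unfolding EA_def X_sum using hoeffding(2)[OF i J, of "\<phi>/2"] phi by simp
  also have "\<dots> \<le> \<tau> * \<delta> / 2^(2*w+8)" using eps_bound[of w] by simp
  finally show ?thesis .
qed

definition Bad1 :: "nat set \<Rightarrow> nat \<Rightarrow> (nat \<times> nat \<Rightarrow> real) set" where
  "Bad1 Bs w = {r\<in>space \<Omega>. real (sz (Suc w)) - real (K + t) \<le> real (card {i\<in>Bs. r \<in> EB i w})}"
definition Bad2 :: "nat set \<Rightarrow> (nat \<times> nat \<Rightarrow> real) set" where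
  "Bad2 As = {r\<in>space \<Omega>. real t \<le> real (card {p\<in>{..L} \<times> As. r \<in> EA (snd p) (fst p)})}"
definition Bad3 :: "nat set \<Rightarrow> (nat \<times> nat \<Rightarrow> real) set" where
  "Bad3 Bs = {r\<in>space \<Omega>. real t \<le> real (card {i\<in>Bs. r \<in> EB i L})}"

lemma bad_prob:
  assumes As: "As \<subseteq> S" "card As \<le> 2 * K" and Bs: "Bs \<subseteq> S"
  shows "(\<Union>w<L. Bad1 Bs w) \<union> Bad2 As \<union> Bad3 Bs \<in> sets \<Omega>"
    and "measure \<Omega> ((\<Union>w<L. Bad1 Bs w) \<union> Bad2 As \<union> Bad3 Bs) \<le> \<delta>"
proof -
  have finB: "finite Bs" and finA: "finite As" using Bs As finS finite_subset by auto
  have n0: "0 < real (card S)" using nS by simp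
  have cB: "card Bs \<le> card S" using Bs finS by (simp add: card_mono)
  have tK': "real K * \<tau> = real t" using tK by (simp add: mult.commute)
  have t1: "1 \<le> real t" using t_pos by simp
  have td: "0 \<le> \<tau> * \<delta>" using tau delta by simp
  have m1: "Bad1 Bs w \<in> sets \<Omega>" for w
    unfolding Bad1_def using finB Bs by (intro P.P.count_set_meas EB_meas) auto
  have m2: "Bad2 As \<in> sets \<Omega>"
    unfolding Bad2_def using finA As by (intro P.P.count_set_meas EA_meas) auto
  have m3: "Bad3 Bs \<in> sets \<Omega>"
    unfolding Bad3_def using finB Bs by (intro P.P.count_set_meas EB_meas) auto
  show meas: "(\<Union>w<L. Bad1 Bs w) \<union> Bad2 As \<union> Bad3 Bs \<in> sets \<Omega>" using m1 m2 m3 by auto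
  have p1: "measure \<Omega> (Bad1 Bs w) \<le> \<tau> * \<delta> / 32 * (1/2)^w" if w: "w < L" for w
  proof -
    define c where "c = real (sz (Suc w)) - real (K + t)"
    have s4: "4 * K \<le> sz (Suc w)" using L_lt[OF w] .
    have Kt: "K + t \<le> 2 * K" using t_le by simp
    have s1: "1 \<le> sz (Suc w)" using s4 K1 by simp
    have "real (card S) / 2^(Suc w + 1) \<le> real (sz (Suc w))" using sz_lower[OF s1] .
    then have A: "real (card S) \<le> real (sz (Suc w)) * 2^(w+2)" by (simp add: field_simps)
    have B: "real (sz (Suc w)) \<le> 2 * c" unfolding c_def using s4 Kt by simp
    have "real (sz (Suc w)) * 2^(w+2) \<le> (2 * c) * 2^(w+2)" by (rule mult_right_mono[OF B]) simp
    also have "(2 * c) * 2^(w+2) = c * 2^(w+3)" by (simp add: power_add)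
    finally have "real (card S) \<le> c * 2^(w+3)" using A by linarith
    then have cl: "real (card S) / 2^(w+3) \<le> c" by (simp add: pos_divide_le_eq)
    have cpos: "0 < c" using cl n0 by (smt (verit) divide_pos_pos zero_less_power)
    have "measure \<Omega> (Bad1 Bs w) \<le> (\<Sum>i\<in>Bs. measure \<Omega> (EB i w)) / c"
      unfolding Bad1_def c_def[symmetric] using finB Bs cpos by (intro P.P.count_markov EB_meas) auto
    also have "\<dots> \<le> (\<Sum>i\<in>Bs. \<tau> * \<delta> / 2^(2*w+8)) / c"
      using pEB Bs cpos by (intro divide_right_mono sum_mono) auto
    also have "\<dots> = real (card Bs) * (\<tau> * \<delta> / 2^(2*w+8)) / c" by simp
    also have "\<dots> \<le> real (card S) * (\<tau> * \<delta> / 2^(2*w+8)) / c"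
      using cB cpos td by (intro divide_right_mono mult_right_mono) auto
    also have "\<dots> \<le> \<tau> * \<delta> / 32 * (1/2)^w" by (rule bad1_num[OF n0 cl refl td])
    finally show ?thesis .
  qed
  have s1: "(\<Sum>w<L. measure \<Omega> (Bad1 Bs w)) \<le> \<delta> / 32"
  proof -
    have "(\<Sum>w<L. measure \<Omega> (Bad1 Bs w)) \<le> (\<Sum>w<L. \<tau> * \<delta> / 32 * (1/2)^w)"
      using p1 by (intro sum_mono) auto
    also have "\<dots> = \<tau> * \<delta> / 32 * (\<Sum>w<L. (1/2)^w)" by (simp add: sum_distrib_left)
    also have "\<dots> \<le> \<tau> * \<delta> / 32 * 2" using geom_half[of L] td by (intro mult_left_mono) auto
    also have "\<dots> \<le> \<delta> / 32" using tau delta by (simp add: field_simps)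
    finally show ?thesis .
  qed
  have p2: "measure \<Omega> (Bad2 As) \<le> \<delta> / 64"
  proof -
    have "measure \<Omega> (Bad2 As) \<le> (\<Sum>p\<in>{..L} \<times> As. measure \<Omega> (EA (snd p) (fst p))) / real t"
      unfolding Bad2_def using finA As t1 by (intro P.P.count_markov EA_meas) auto
    also have "\<dots> \<le> (\<Sum>p\<in>{..L} \<times> As. \<tau> * \<delta> / 256 * (1/2)^(fst p)) / real t"
    proof (intro divide_right_mono sum_mono)
      fix p assume p: "p \<in> {..L} \<times> As"
      have "measure \<Omega> (EA (snd p) (fst p)) \<le> \<tau> * \<delta> / 2^(2*fst p+8)" using pEA p As by auto
      also have "\<dots> \<le> \<tau> * \<delta> / 256 * (1/2)^(fst p)"
      proof -
        have "(2::real)^(fst p + 8) \<le> 2^(2*fst p+8)" by (intro power_increasing) auto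
        then have "\<tau> * \<delta> / 2^(2*fst p+8) \<le> \<tau> * \<delta> / 2^(fst p + 8)"
          using td by (intro divide_left_mono) auto
        also have "\<dots> = \<tau> * \<delta> / 256 * (1/2)^(fst p)" by (simp add: power_add field_simps)
        finally show ?thesis .
      qed
      finally show "measure \<Omega> (EA (snd p) (fst p)) \<le> \<tau> * \<delta> / 256 * (1/2)^(fst p)" .
    qed (use t1 in auto)
    also have "(\<Sum>p\<in>{..L} \<times> As. \<tau> * \<delta> / 256 * (1/2::real)^(fst p)) = real (card As) * (\<tau> * \<delta> / 256 * (\<Sum>w<Suc L. (1/2)^w))"
    proof -
      have "(\<Sum>p\<in>{..L} \<times> As. \<tau> * \<delta> / 256 * (1/2::real)^(fst p)) = (\<Sum>w\<in>{..L}. \<Sum>i\<in>As. \<tau> * \<delta> / 256 * (1/2::real)^w)"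
        unfolding sum.cartesian_product by (rule sum.cong) auto
      also have "\<dots> = (\<Sum>w<Suc L. real (card As) * (\<tau> * \<delta> / 256 * (1/2::real)^w))"
        by (simp add: lessThan_Suc_atMost)
      also have "\<dots> = real (card As) * (\<tau> * \<delta> / 256 * (\<Sum>w<Suc L. (1/2)^w))"
        by (simp only: sum_distrib_left[symmetric])
      finally show ?thesis .
    qed
    also have "\<dots> \<le> real (2 * K) * (\<tau> * \<delta> / 256 * 2)"
    proof -
      have gn: "0 \<le> (\<Sum>w<Suc L. (1/2::real)^w)" by (intro sum_nonneg) auto
      have f1: "\<tau> * \<delta> / 256 * (\<Sum>w<Suc L. (1/2)^w) \<le> \<tau> * \<delta> / 256 * 2"
        using geom_half[of "Suc L"] td by (intro mult_left_mono) auto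
      have f2: "0 \<le> \<tau> * \<delta> / 256 * (\<Sum>w<Suc L. (1/2)^w)" using gn td by simp
      have f3: "real (card As) \<le> real (2 * K)" using As(2) by simp
      show ?thesis using mult_mono[OF f3 f1 _ f2] by simp
    qed
    finally have "measure \<Omega> (Bad2 As) \<le> real (2 * K) * (\<tau> * \<delta> / 256 * 2) / real t"
      using t1 by (simp add: divide_right_mono)
    also have "\<dots> = \<delta> / 64" using tK' t1 by (simp add: field_simps)
    finally show ?thesis .
  qed
  have p3: "measure \<Omega> (Bad3 Bs) \<le> \<delta> / 32"
  proof -
    have "measure \<Omega> (Bad3 Bs) \<le> (\<Sum>i\<in>Bs. measure \<Omega> (EB i L)) / real t"
      unfolding Bad3_def using finB Bs t1 by (intro P.P.count_markov EB_meas) auto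
    also have "\<dots> \<le> (\<Sum>i\<in>Bs. \<tau> * \<delta> / 2^(2*L+8)) / real t"
      using pEB Bs t1 by (intro divide_right_mono sum_mono) auto
    also have "\<dots> = real (card Bs) * (\<tau> * \<delta> / 2^(2*L+8)) / real t" by simp
    also have "\<dots> \<le> (2^(L+3) * real K) * (\<tau> * \<delta> / 2^(2*L+8)) / real t"
      using cB n_lt td t1 by (intro divide_right_mono mult_right_mono) auto
    also have "\<dots> = \<delta> / 2^(L+5)"
    proof -
      have h2: "(2::real)^(2*L) = 2^L * 2^L" by (metis mult_2 power_add)
      show ?thesis using tK t1 by (simp add: power_add h2 field_simps)
    qed
    also have "\<dots> \<le> \<delta> / 32" using delta by (intro divide_left_mono) (auto simp: power_add)
    finally show ?thesis .
  qed
  have "measure \<Omega> ((\<Union>w<L. Bad1 Bs w) \<union> Bad2 As \<union> Bad3 Bs)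
      \<le> measure \<Omega> ((\<Union>w<L. Bad1 Bs w) \<union> Bad2 As) + measure \<Omega> (Bad3 Bs)"
    using m1 m2 m3 by (intro measure_Un_le) auto
  also have "\<dots> \<le> measure \<Omega> (\<Union>w<L. Bad1 Bs w) + measure \<Omega> (Bad2 As) + measure \<Omega> (Bad3 Bs)"
    using m1 m2 by (simp add: measure_Un_le sets.countable_UN')
  also have "\<dots> \<le> (\<Sum>w<L. measure \<Omega> (Bad1 Bs w)) + measure \<Omega> (Bad2 As) + measure \<Omega> (Bad3 Bs)"
    using m1 by (simp add: measure_UNION_le)
  also have "\<dots> \<le> \<delta>" using s1 p2 p3 delta by linarith
  finally show "measure \<Omega> ((\<Union>w<L. Bad1 Bs w) \<union> Bad2 As \<union> Bad3 Bs) \<le> \<delta>" .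
qed

end


context full
begin

lemma theta_bd: "i \<in> S \<Longrightarrow> 0 \<le> \<theta> i \<and> \<theta> i \<le> 1"
  using mean_bd[OF Dprob Dsets Dbd] by blast

lemma main_prob:
  assumes gap: "kth_mean \<theta> S (K - t) - kth_mean \<theta> S (K + t + 1) \<ge> \<phi>"
  shows "1 - \<delta> \<le> measure \<Omega> {r\<in>space \<Omega>. top_K_set \<theta> S K (2*\<tau>) (out r)}"
proof -
  define hi where "hi = kth_mean \<theta> S (K - t)"
  define lo where "lo = kth_mean \<theta> S (K + t + 1)"
  define As where "As = {i\<in>S. hi \<le> \<theta> i}"
  define Bs where "Bs = {i\<in>S. \<theta> i \<le> lo}"
  have gap': "lo + \<phi> \<le> hi" using gap unfolding hi_def lo_def by simp
  have Kt1: "1 \<le> K - t" using t_le t_pos by linarith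
  have cA: "K - t \<le> card As" unfolding As_def hi_def
    using kth_ge_card[OF finS Kt1] nS by simp
  have cA': "K \<le> card As + t" using cA by (simp add: le_diff_conv)
  have SB: "S - Bs = {i\<in>S. lo < \<theta> i}" unfolding Bs_def by auto
  have "card (S - Bs) < K + t + 1" unfolding SB lo_def
    using kth_gt_card[OF finS _ nS] by simp
  then have cSB: "card (S - Bs) \<le> K + t" by simp
  have ASB: "As \<subseteq> S - Bs" unfolding As_def Bs_def using gap' phi by auto
  have cA2: "card As \<le> 2 * K"
  proof -
    have "card As \<le> card (S - Bs)" using ASB finS by (intro card_mono) auto
    then show ?thesis using cSB t_le by linarith
  qed
  have AsS: "As \<subseteq> S" and BsS: "Bs \<subseteq> S" unfolding As_def Bs_def by auto
  define Bad where "Bad = (\<Union>w<L. Bad1 Bs w) \<union> Bad2 As \<union> Bad3 Bs"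
  have mB: "Bad \<in> sets \<Omega>" and pB: "measure \<Omega> Bad \<le> \<delta>"
    unfolding Bad_def using bad_prob[OF AsS cA2 BsS] by auto
  have good: "top_K_set \<theta> S K (2*\<tau>) (out r)" if r: "r \<in> space \<Omega> - Bad" for r
  proof -
    have rs: "r \<in> space \<Omega>" using r by simp
    have eB: "{i\<in>Bs. r \<in> EB i w} = {i\<in>Bs. \<theta> i + \<phi>/2 \<le> X r i w}" for w
      unfolding EB_def using rs by auto
    have eA: "{p\<in>{..L} \<times> As. r \<in> EA (snd p) (fst p)} = {p\<in>{..L} \<times> As. X r (snd p) (fst p) \<le> \<theta> (snd p) - \<phi>/2}"
      unfolding EA_def using rs by auto
    have G1: "\<forall>w<L. card {i\<in>Bs. \<theta> i + \<phi>/2 \<le> X r i w} + (K + t) < sz (Suc w)"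
    proof (intro allI impI)
      fix w assume w: "w < L"
      have "r \<notin> Bad1 Bs w" using r w unfolding Bad_def by blast
      then have "\<not> real (sz (Suc w)) - real (K + t) \<le> real (card {i\<in>Bs. \<theta> i + \<phi>/2 \<le> X r i w})"
        using rs eB unfolding Bad1_def by simp
      then show "card {i\<in>Bs. \<theta> i + \<phi>/2 \<le> X r i w} + (K + t) < sz (Suc w)" by linarith
    qed
    have G2: "card {p\<in>{..L} \<times> As. X r (snd p) (fst p) \<le> \<theta> (snd p) - \<phi>/2} \<le> t"
    proof -
      have "r \<notin> Bad2 As" using r unfolding Bad_def by blast
      then have "\<not> real t \<le> real (card {p\<in>{..L} \<times> As. X r (snd p) (fst p) \<le> \<theta> (snd p) - \<phi>/2})"
        using rs eA unfolding Bad2_def by simp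
      then show ?thesis by linarith
    qed
    have G3: "card {i\<in>Bs. \<theta> i + \<phi>/2 \<le> X r i L} \<le> t"
    proof -
      have "r \<notin> Bad3 Bs" using r unfolding Bad_def by blast
      then have "\<not> real t \<le> real (card {i\<in>Bs. \<theta> i + \<phi>/2 \<le> X r i L})"
        using rs eB unfolding Bad3_def by simp
      then show ?thesis by linarith
    qed
    have disj: "card (As - out r) \<le> t \<or> card (out r \<inter> Bs) \<le> t"
      by (rule good_imp[OF finS szL As_def Bs_def cSB gap' G1 G2 G3])
    have TS: "out r \<subseteq> S" unfolding out_def using sel_subset Sset_sub by (meson subset_trans)
    have cT: "card (out r) = K"
    proof -
      have "finite (Sset r L)" using finite_Sset[OF finS] .
      moreover have "K \<le> card (Sset r L)" using card_Sset[OF finS] szL by simp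
      ultimately show ?thesis unfolding out_def by (rule sel_card)
    qed
    have KS: "K \<le> card S" using nS by simp
    have "(\<Sum>k=1..K. kth_mean \<theta> S k) - (\<Sum>i\<in>out r. \<theta> i) \<le> 2 * real t"
      by (rule regret_core[OF finS KS _ TS cT As_def cA' Bs_def cSB disj]) (use theta_bd in auto)
    then have "aggregate_regret \<theta> S K (out r) \<le> 1 / real K * (2 * real t)"
      unfolding aggregate_regret_def using K1 by (intro mult_left_mono) auto
    also have "\<dots> = 2 * \<tau>" using tK K1 by (simp add: field_simps)
    finally show ?thesis unfolding top_K_set_def using TS cT by simp
  qed
  have "space \<Omega> - Bad \<subseteq> {r\<in>space \<Omega>. top_K_set \<theta> S K (2*\<tau>) (out r)}" using good by auto
  then have "measure \<Omega> (space \<Omega> - Bad) \<le> measure \<Omega> {r\<in>space \<Omega>. top_K_set \<theta> S K (2*\<tau>) (out r)}"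
    using out_pred_meas by (intro P.P.finite_measure_mono) auto
  moreover have "measure \<Omega> (space \<Omega> - Bad) = 1 - measure \<Omega> Bad" using P.P.prob_compl[OF mB] .
  ultimately show ?thesis using pB by linarith
qed

end


theorem lemma3:
  shows "\<exists>C::real. C > 0 \<and>
    (\<exists>A :: nat set \<Rightarrow> nat \<Rightarrow> real \<Rightarrow> real \<Rightarrow> real \<Rightarrow> (nat \<Rightarrow> real) \<Rightarrow> history \<Rightarrow> bandit_action.
      \<forall>(S::nat set) (D::nat \<Rightarrow> real measure) (K::nat) (\<tau>::real) (\<phi>::real) (\<delta>::real).
        finite S \<and>
        (\<forall>i\<in>S. prob_space (D i) \<and> sets (D i) = sets borel \<and> (AE x in D i. 0 \<le> x \<and> x \<le> 1)) \<and>
        K \<ge> 1 \<and> 0 < \<tau> \<and> \<tau> \<le> 1/2 \<and> \<tau> * real K \<in> \<int> \<and>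
        (1 - \<tau>) * real K \<ge> 1 \<and> (1 + \<tau>) * real K + 1 \<le> real (card S) \<and>
        0 < \<phi> \<and> \<phi> \<le> 1 \<and> 0 < \<delta> \<and> \<delta> \<le> 1/2 \<and>
        kth_mean (\<lambda>i. mean (D i)) S (nat \<lfloor>(1 - \<tau>) * real K\<rfloor>)
          - kth_mean (\<lambda>i. mean (D i)) S (nat \<lfloor>(1 + \<tau>) * real K\<rfloor> + 1) \<ge> \<phi>
        \<longrightarrow>
        (let N = nat \<lfloor>C * real (card S) / \<phi>\<^sup>2 * (ln (1 / \<tau>) + ln (1 / \<delta>))\<rfloor> in
          (\<forall>r u. (\<forall>p. 0 \<le> r p \<and> r p \<le> 1) \<longrightarrow>
             (\<exists>T. exec (A S K \<tau> \<phi> \<delta> u) r N [] = Some T)) \<and>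
          measure (bandit_space S D)
            {(r, u) \<in> space (bandit_space S D).
               \<exists>T. exec (A S K \<tau> \<phi> \<delta> u) r N [] = Some T \<and>
                   top_K_set (\<lambda>i. mean (D i)) S K (2 * \<tau>) T} \<ge> 1 - \<delta>))"
proof (intro exI[of _ "50::real"] conjI)
  show "(50::real) > 0" by simp
  show "\<exists>A :: nat set \<Rightarrow> nat \<Rightarrow> real \<Rightarrow> real \<Rightarrow> real \<Rightarrow> (nat \<Rightarrow> real) \<Rightarrow> history \<Rightarrow> bandit_action.
      \<forall>(S::nat set) (D::nat \<Rightarrow> real measure) (K::nat) (\<tau>::real) (\<phi>::real) (\<delta>::real).
        finite S \<and>
        (\<forall>i\<in>S. prob_space (D i) \<and> sets (D i) = sets borel \<and> (AE x in D i. 0 \<le> x \<and> x \<le> 1)) \<and>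
        K \<ge> 1 \<and> 0 < \<tau> \<and> \<tau> \<le> 1/2 \<and> \<tau> * real K \<in> \<int> \<and>
        (1 - \<tau>) * real K \<ge> 1 \<and> (1 + \<tau>) * real K + 1 \<le> real (card S) \<and>
        0 < \<phi> \<and> \<phi> \<le> 1 \<and> 0 < \<delta> \<and> \<delta> \<le> 1/2 \<and>
        kth_mean (\<lambda>i. mean (D i)) S (nat \<lfloor>(1 - \<tau>) * real K\<rfloor>)
          - kth_mean (\<lambda>i. mean (D i)) S (nat \<lfloor>(1 + \<tau>) * real K\<rfloor> + 1) \<ge> \<phi>
        \<longrightarrow>
        (let N = nat \<lfloor>50 * real (card S) / \<phi>\<^sup>2 * (ln (1 / \<tau>) + ln (1 / \<delta>))\<rfloor> in
          (\<forall>r u. (\<forall>p. 0 \<le> r p \<and> r p \<le> 1) \<longrightarrow>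
             (\<exists>T. exec (A S K \<tau> \<phi> \<delta> u) r N [] = Some T)) \<and>
          measure (bandit_space S D)
            {(r, u) \<in> space (bandit_space S D).
               \<exists>T. exec (A S K \<tau> \<phi> \<delta> u) r N [] = Some T \<and>
                   top_K_set (\<lambda>i. mean (D i)) S K (2 * \<tau>) T} \<ge> 1 - \<delta>)"
  proof (intro exI[of _ "\<lambda>S K \<tau> \<phi> \<delta> u. alg.policy S K \<tau> \<phi> \<delta>"] allI impI)
    fix S :: "nat set" and D :: "nat \<Rightarrow> real measure" and K :: nat and \<tau> \<phi> \<delta> :: real
    assume H: "finite S \<and>
        (\<forall>i\<in>S. prob_space (D i) \<and> sets (D i) = sets borel \<and> (AE x in D i. 0 \<le> x \<and> x \<le> 1)) \<and>
        K \<ge> 1 \<and> 0 < \<tau> \<and> \<tau> \<le> 1/2 \<and> \<tau> * real K \<in> \<int> \<and>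
        (1 - \<tau>) * real K \<ge> 1 \<and> (1 + \<tau>) * real K + 1 \<le> real (card S) \<and>
        0 < \<phi> \<and> \<phi> \<le> 1 \<and> 0 < \<delta> \<and> \<delta> \<le> 1/2 \<and>
        kth_mean (\<lambda>i. mean (D i)) S (nat \<lfloor>(1 - \<tau>) * real K\<rfloor>)
          - kth_mean (\<lambda>i. mean (D i)) S (nat \<lfloor>(1 + \<tau>) * real K\<rfloor> + 1) \<ge> \<phi>"
    note c1 = H[THEN conjunct1]
    note r1 = H[THEN conjunct2]
    note c2 = r1[THEN conjunct1]
    note r2 = r1[THEN conjunct2]
    note c3 = r2[THEN conjunct1]
    note r3 = r2[THEN conjunct2]
    note c4 = r3[THEN conjunct1]
    note r4 = r3[THEN conjunct2]
    note c5 = r4[THEN conjunct1]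
    note r5 = r4[THEN conjunct2]
    note c6 = r5[THEN conjunct1]
    note r6 = r5[THEN conjunct2]
    note c7 = r6[THEN conjunct1]
    note r7 = r6[THEN conjunct2]
    note c8 = r7[THEN conjunct1]
    note r8 = r7[THEN conjunct2]
    note c9 = r8[THEN conjunct1]
    note r9 = r8[THEN conjunct2]
    note c10 = r9[THEN conjunct1]
    note r10 = r9[THEN conjunct2]
    note c11 = r10[THEN conjunct1]
    note r11 = r10[THEN conjunct2]
    note c12 = r11[THEN conjunct1]
    note c13 = r11[THEN conjunct2]
    have finS: "finite S" by (rule c1)
    have Dh: "\<forall>i\<in>S. prob_space (D i) \<and> sets (D i) = sets borel \<and> (AE x in D i. 0 \<le> x \<and> x \<le> 1)"
      by (rule c2)
    have K1: "1 \<le> K" by (rule c3)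
    have tau: "0 < \<tau>" "\<tau> \<le> 1/2" by (rule c4, rule c5)
    have tZ: "\<tau> * real K \<in> \<int>" by (rule c6)
    have nS': "(1 + \<tau>) * real K + 1 \<le> real (card S)" by (rule c8)
    have phi: "0 < \<phi>" "\<phi> \<le> 1" by (rule c9, rule c10)
    have delta: "0 < \<delta>" "\<delta> \<le> 1/2" by (rule c11, rule c12)
    have gap: "kth_mean (\<lambda>i. mean (D i)) S (nat \<lfloor>(1 - \<tau>) * real K\<rfloor>)
          - kth_mean (\<lambda>i. mean (D i)) S (nat \<lfloor>(1 + \<tau>) * real K\<rfloor> + 1) \<ge> \<phi>" by (rule c13)
    define t where "t = nat \<lfloor>\<tau> * real K\<rfloor>"
    from tZ obtain z where z: "\<tau> * real K = of_int z" by (rule Ints_cases)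
    have "0 < \<tau> * real K" using tau K1 by simp
    then have "0 < (of_int z :: real)" using z by simp
    then have z0: "0 \<le> z" by simp
    have tK: "\<tau> * real K = real t" unfolding t_def using z z0 by simp
    have tleK: "t \<le> K"
    proof -
      have "\<tau> * real K \<le> real K" using tau K1 by (simp add: mult_left_le_one_le)
      then show ?thesis using tK by simp
    qed
    have e1: "nat \<lfloor>(1 - \<tau>) * real K\<rfloor> = K - t"
    proof -
      have "(1 - \<tau>) * real K = real (K - t)" using tK tleK by (simp add: left_diff_distrib of_nat_diff)
      then show ?thesis by simp
    qed
    have e2: "nat \<lfloor>(1 + \<tau>) * real K\<rfloor> + 1 = K + t + 1"
    proof -
      have "(1 + \<tau>) * real K = real (K + t)" using tK by (simp add: distrib_right)
      then show ?thesis by simp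
    qed
    have nS: "K + t + 1 \<le> card S"
    proof -
      have "(1 + \<tau>) * real K = real (K + t)" using tK by (simp add: distrib_right)
      then show ?thesis using nS' by linarith
    qed
    have bs: "bsetup S D" unfolding bsetup_def using finS Dh by blast
    have nm: "nums S K \<tau> \<phi> \<delta> t" unfolding nums_def
      using finS K1 tau tK phi delta nS by blast
    interpret F: full S K \<tau> \<phi> \<delta> t D unfolding full_def using nm bs by blast
    have gap': "kth_mean F.\<theta> S (K - t) - kth_mean F.\<theta> S (K + t + 1) \<ge> \<phi>"
      using gap unfolding e1 e2 .
    have ex: "exec F.policy r F.N [] = Some (F.out r)" for r
      by (rule F.exec_main[OF finS F.budget])
    have BS: "bandit_space S D = F.\<Omega> \<Otimes>\<^sub>M (\<Pi>\<^sub>M k\<in>(UNIV::nat set). uniform_measure lborel {0..1::real})"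
      unfolding bandit_space_def F.\<Omega>_eq ..
    define U where "U = (\<Pi>\<^sub>M k\<in>(UNIV::nat set). uniform_measure lborel {0..1::real})"
    have pU: "prob_space U" unfolding U_def
      by (intro prob_space_PiM prob_space_uniform_measure) auto
    interpret U: prob_space U by (rule pU)
    define G where "G = {r\<in>space F.\<Omega>. top_K_set F.\<theta> S K (2*\<tau>) (F.out r)}"
    have Gm: "G \<in> sets F.\<Omega>" unfolding G_def by (rule F.out_pred_meas)
    have seteq: "{(r, u) \<in> space (bandit_space S D).
               \<exists>T. exec F.policy r F.N [] = Some T \<and> top_K_set F.\<theta> S K (2 * \<tau>) T} = G \<times> space U"
      unfolding BS U_def[symmetric] G_def using ex by (auto simp: space_pair_measure)
    have "emeasure (bandit_space S D) (G \<times> space U) = emeasure F.\<Omega> G * emeasure U (space U)"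
      unfolding BS U_def[symmetric] by (rule U.emeasure_pair_measure_Times[OF Gm sets.top])
    also have "\<dots> = emeasure F.\<Omega> G" by (simp add: U.emeasure_space_1)
    finally have "measure (bandit_space S D) (G \<times> space U) = measure F.\<Omega> G"
      by (simp add: measure_def)
    moreover have "1 - \<delta> \<le> measure F.\<Omega> G" unfolding G_def by (rule F.main_prob[OF gap'])
    ultimately have mp: "1 - \<delta> \<le> measure (bandit_space S D) {(r, u) \<in> space (bandit_space S D).
               \<exists>T. exec F.policy r F.N [] = Some T \<and> top_K_set F.\<theta> S K (2 * \<tau>) T}"
      unfolding seteq by simp
    show "let N = nat \<lfloor>50 * real (card S) / \<phi>\<^sup>2 * (ln (1 / \<tau>) + ln (1 / \<delta>))\<rfloor> in
          (\<forall>r u. (\<forall>p. 0 \<le> r p \<and> r p \<le> 1) \<longrightarrow>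
             (\<exists>T. exec ((\<lambda>S K \<tau> \<phi> \<delta> u. alg.policy S K \<tau> \<phi> \<delta>) S K \<tau> \<phi> \<delta> u) r N [] = Some T)) \<and>
          measure (bandit_space S D)
            {(r, u) \<in> space (bandit_space S D).
               \<exists>T. exec ((\<lambda>S K \<tau> \<phi> \<delta> u. alg.policy S K \<tau> \<phi> \<delta>) S K \<tau> \<phi> \<delta> u) r N [] = Some T \<and>
                   top_K_set (\<lambda>i. mean (D i)) S K (2 * \<tau>) T} \<ge> 1 - \<delta>"
      unfolding Let_def F.N_def[symmetric] using ex mp by auto
  qed
qed


end
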